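(* Let $f\in C^2(\mathbb{R})$ with $f''<0$, let $u_0\in BV(\mathbb{R})$, let $u$ be the entropy admissible solution of $\partial_t u+\partial_x[f(u)]=0$, $u(0,\cdot)=u_0$, and set $w:=f\circ u$. Let $\gamma:]t_1,t_2[\to\mathbb{R}$ be a $C^1$ curve across which $u$ is discontinuous, fix $\tau\in]t_1,t_2[$, and assume that there is a neighborhood $\mathcal U$ of $(\tau,\gamma(\tau))$ such that $u$ admits continuous extensions to $\mathcal U\cap\{(t,x):x\le\gamma(t)\}$ and to $\mathcal U\cap\{(t,x):x\ge\gamma(t)\}$. If $\gamma'(\tau)\ne0$, then the limits below exist and $$\lim_{t\to\tau^+}w(t,\gamma(\tau))\le\lim_{t\to\tau^-}w(t,\gamma(\tau)).$$ If $\gamma'(\tau)=0$, then $w$ is continuous at $(\tau,\gamma(\tau))$ (i.e. the continuous extensions of $w$ from the two sides of $\gamma$ coincide at this point).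
   Context: The entropy admissible solution is the Kružkov solution of the Cauchy problem (the unique bounded function satisfying $\iint\partial_t\varphi|u-c|+\partial_x\varphi\,\mathrm{sign}(u-c)[f(u)-f(c)]\,dx\,dt+\int\varphi(0,\cdot)|u_0-c|\,dx\ge0$ for all $c\in\mathbb{R}$ and nonnegative test functions $\varphi$). "$u$ is discontinuous across $\gamma$" means that the one-sided limits of $u$ from the left and from the right of $\gamma$ differ. *)

theory Defs
  imports "HOL-Analysis.Analysis"
begin

definition bounded_pointwise_variation :: "(real \<Rightarrow> real) \<Rightarrow> bool" where
  "bounded_pointwise_variation v \<longleftrightarrow>
     (\<exists>M. \<forall>(n::nat) (xs::nat \<Rightarrow> real). (\<forall>i<n. xs i < xs (Suc i)) \<longrightarrow>
        (\<Sum>i<n. \<bar>v (xs (Suc i)) - v (xs i)\<bar>) \<le> M)"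

text \<open>BV(R): integrable functions having a representative (a.e. equal function)
  of bounded pointwise variation, i.e. finite essential variation.\<close>
definition BV :: "(real \<Rightarrow> real) \<Rightarrow> bool" where
  "BV u0 \<longleftrightarrow> integrable lborel u0 \<and>
     (\<exists>v. (AE x in lborel. v x = u0 x) \<and> bounded_pointwise_variation v)"

text \<open>Nonnegative compactly supported C^1 test functions on R^2 (variables (t,x)),
  with partial derivatives phit (in t) and phix (in x).\<close>
definition test_fun :: "(real \<times> real \<Rightarrow> real) \<Rightarrow> (real \<times> real \<Rightarrow> real) \<Rightarrow> (real \<times> real \<Rightarrow> real) \<Rightarrow> bool" where
  "test_fun phi phit phix \<longleftrightarrow>
     (\<forall>p. (phi has_derivative (\<lambda>(h, k). phit p * h + phix p * k)) (at p)) \<and>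
     continuous_on UNIV phit \<and> continuous_on UNIV phix \<and>
     (\<forall>p. 0 \<le> phi p) \<and> bounded {p. phi p \<noteq> 0}"

text \<open>Kruzkov entropy admissible solution of u_t + f(u)_x = 0, u(0,.) = u0.
  The solution is a function of (t,x), relevant for t > 0.\<close>
definition kruzkov_solution :: "(real \<Rightarrow> real) \<Rightarrow> (real \<Rightarrow> real) \<Rightarrow> (real \<times> real \<Rightarrow> real) \<Rightarrow> bool" where
  "kruzkov_solution f u0 u \<longleftrightarrow>
     u \<in> borel_measurable lborel \<and>
     (\<exists>M. AE p in lborel. fst p > 0 \<longrightarrow> \<bar>u p\<bar> \<le> M) \<and>
     (\<forall>c phi phit phix. test_fun phi phit phix \<longrightarrow>
        0 \<le> (\<integral>p. indicator {p. fst p > 0} p *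
                 (phit p * \<bar>u p - c\<bar> + phix p * sgn (u p - c) * (f (u p) - f c)) \<partial>lborel)
           + (\<integral>x. phi (0, x) * \<bar>u0 x - c\<bar> \<partial>lborel))"

definition left_side :: "(real \<times> real) set \<Rightarrow> real \<Rightarrow> real \<Rightarrow> (real \<Rightarrow> real) \<Rightarrow> (real \<times> real) set" where
  "left_side U t1 t2 \<gamma> = {(t, x) \<in> U. t1 < t \<and> t < t2 \<and> x \<le> \<gamma> t}"
definition right_side :: "(real \<times> real) set \<Rightarrow> real \<Rightarrow> real \<Rightarrow> (real \<Rightarrow> real) \<Rightarrow> (real \<times> real) set" where
  "right_side U t1 t2 \<gamma> = {(t, x) \<in> U. t1 < t \<and> t < t2 \<and> \<gamma> t \<le> x}"

definition discontinuous_across :: "(real \<times> real \<Rightarrow> real) \<Rightarrow> real \<Rightarrow> real \<Rightarrow> (real \<Rightarrow> real) \<Rightarrow> bool" where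
  "discontinuous_across u t1 t2 \<gamma> \<longleftrightarrow>
     (\<forall>t. t1 < t \<and> t < t2 \<longrightarrow>
        (\<exists>l r. l \<noteq> r \<and>
           (u \<longlongrightarrow> l) (at (t, \<gamma> t) within {(s, y). t1 < s \<and> s < t2 \<and> y < \<gamma> s}) \<and>
           (u \<longlongrightarrow> r) (at (t, \<gamma> t) within {(s, y). t1 < s \<and> s < t2 \<and> \<gamma> s < y})))"

end

theory Submission
  imports Defs
begin
definition sqp :: "real \<Rightarrow> real" where "sqp y = (max 0 y)^2"

lemma sqp_deriv0: "(sqp has_real_derivative 0) (at 0)"
proof -
  have "((\<lambda>h. (sqp (0 + h) - sqp 0) / h) \<longlongrightarrow> 0) (at 0)"
  proof (rule tendsto_0_le[where f="\<lambda>h. h" and K=1])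
    show "((\<lambda>h::real. h) \<longlongrightarrow> 0) (at 0)" by (rule tendsto_ident_at)
    show "\<forall>\<^sub>F x in at 0. norm ((sqp (0 + x) - sqp 0) / x) \<le> norm x * 1"
      by (intro always_eventually allI) (auto simp: sqp_def max_def power2_eq_square abs_mult)
  qed
  then show ?thesis by (simp add: DERIV_def)
qed

lemma sqp_deriv_pos: "(y::real) > 0 \<Longrightarrow> (sqp has_real_derivative (2 * y)) (at y)"
proof -
  assume y: "y > 0"
  have "((\<lambda>z. z^2) has_real_derivative real 2 * y^(2 - Suc 0)) (at y)" by (rule DERIV_pow)
  then have "((\<lambda>z. z^2) has_real_derivative 2 * y) (at y)" by simp
  then show ?thesis
    by (rule has_field_derivative_transform_within_open[where S="{0<..}"]) (use y in \<open>auto simp: sqp_def\<close>)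
qed

lemma sqp_deriv_neg: "(y::real) < 0 \<Longrightarrow> (sqp has_real_derivative 0) (at y)"
proof -
  assume y: "y < 0"
  have "((\<lambda>z. 0) has_real_derivative 0) (at y)" by (rule DERIV_const)
  then show ?thesis
    by (rule has_field_derivative_transform_within_open[where S="{..<0}"]) (use y in \<open>auto simp: sqp_def\<close>)
qed

lemma sqp_deriv: "(sqp has_real_derivative (2 * max 0 y)) (at y)"
  using sqp_deriv0 sqp_deriv_pos[of y] sqp_deriv_neg[of y]
  by (cases "y < 0"; cases "y = 0") (auto simp: max_def)

definition bump :: "real \<Rightarrow> real" where "bump s = sqp (1 - s^2)"
definition dbump :: "real \<Rightarrow> real" where "dbump s = -4 * s * max 0 (1 - s^2)"

lemma bump_deriv: "(bump has_real_derivative dbump s) (at s)"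
proof -
  have "((\<lambda>s. 1 - s^2) has_real_derivative (0 - real 2 * s^(2 - Suc 0))) (at s)"
    by (intro DERIV_diff DERIV_const DERIV_pow)
  then have "((\<lambda>s. 1 - s^2) has_real_derivative (- 2 * s)) (at s)" by simp
  from DERIV_chain2[OF sqp_deriv this] show ?thesis
    unfolding bump_def[abs_def] dbump_def by (simp add: algebra_simps)
qed

lemma bump_alt: "bump s = (max 0 (1 - s^2))^2" by (simp add: bump_def sqp_def)

lemma cont_bump: "continuous_on UNIV bump" unfolding bump_alt[abs_def] by (intro continuous_intros)
lemma cont_dbump: "continuous_on UNIV dbump" unfolding dbump_def[abs_def] by (intro continuous_intros)

lemma bump_nonneg: "0 \<le> bump s" by (simp add: bump_alt)
lemma bump_le1: "bump s \<le> 1"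
proof -
  have "max 0 (1 - s^2) \<le> 1" "0 \<le> max 0 (1 - s^2)" by auto
  then show ?thesis unfolding bump_alt by (simp add: power_le_one)
qed
lemma dbump_bound: "\<bar>dbump s\<bar> \<le> 4"
proof (cases "\<bar>s\<bar> \<le> 1")
  case True
  then have "s^2 \<le> 1" by (simp add: abs_square_le_1)
  hence "\<bar>s\<bar> * (1 - s^2) \<le> 1" using True
    by (intro mult_le_one) auto
  then show ?thesis using \<open>s^2 \<le> 1\<close> by (simp add: dbump_def abs_mult max_def)
next
  case False
  then have "1 < \<bar>s\<bar> * \<bar>s\<bar>" by (intro less_1_mult) auto
  then have "1 < s^2" by (simp add: power2_eq_square abs_mult_self_eq)
  then show ?thesis by (simp add: dbump_def)
qed
lemma bump_out: "1 \<le> \<bar>s\<bar> \<Longrightarrow> bump s = 0 \<and> dbump s = 0"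
proof -
  assume h: "1 \<le> \<bar>s\<bar>"
  have "1 * 1 \<le> \<bar>s\<bar> * \<bar>s\<bar>" by (rule mult_mono) (use h in auto)
  then have "1 \<le> s^2" by (simp add: power2_eq_square abs_mult_self_eq)
  then show ?thesis by (simp add: bump_alt dbump_def max_def)
qed
lemma bump0: "bump 0 = 1" by (simp add: bump_alt)

lemma bump_isCont: "isCont bump x" using bump_deriv DERIV_isCont by blast
lemma dbump_isCont: "isCont dbump x" using cont_dbump by (simp add: continuous_on_eq_continuous_at)

lemma cont_bump_comp[continuous_intros]: "continuous_on S g \<Longrightarrow> continuous_on S (\<lambda>x. bump (g x))"
  by (rule continuous_on_compose2[OF cont_bump]) auto
lemma cont_dbump_comp[continuous_intros]: "continuous_on S g \<Longrightarrow> continuous_on S (\<lambda>x. dbump (g x))"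
  by (rule continuous_on_compose2[OF cont_dbump]) auto

lemma bump_meas[measurable]: "bump \<in> borel_measurable borel"
  by (rule borel_measurable_continuous_onI[OF cont_bump])
lemma dbump_meas[measurable]: "dbump \<in> borel_measurable borel"
  by (rule borel_measurable_continuous_onI[OF cont_dbump])

definition phiF :: "real \<Rightarrow> real \<Rightarrow> real \<Rightarrow> real \<Rightarrow> real \<times> real \<Rightarrow> real" where
  "phiF \<tau> x0 \<sigma> \<epsilon> p = bump ((fst p - \<tau>) / \<epsilon>) * bump ((snd p - x0 - \<sigma> * (fst p - \<tau>)) / \<epsilon>)"
definition phitF :: "real \<Rightarrow> real \<Rightarrow> real \<Rightarrow> real \<Rightarrow> real \<times> real \<Rightarrow> real" where
  "phitF \<tau> x0 \<sigma> \<epsilon> p = dbump ((fst p - \<tau>) / \<epsilon>) / \<epsilon> * bump ((snd p - x0 - \<sigma> * (fst p - \<tau>)) / \<epsilon>)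
      - \<sigma> / \<epsilon> * bump ((fst p - \<tau>) / \<epsilon>) * dbump ((snd p - x0 - \<sigma> * (fst p - \<tau>)) / \<epsilon>)"
definition phixF :: "real \<Rightarrow> real \<Rightarrow> real \<Rightarrow> real \<Rightarrow> real \<times> real \<Rightarrow> real" where
  "phixF \<tau> x0 \<sigma> \<epsilon> p = bump ((fst p - \<tau>) / \<epsilon>) * dbump ((snd p - x0 - \<sigma> * (fst p - \<tau>)) / \<epsilon>) / \<epsilon>"

lemma phiF_support:
  assumes "phiF \<tau> x0 \<sigma> \<epsilon> p \<noteq> 0 \<or> phitF \<tau> x0 \<sigma> \<epsilon> p \<noteq> 0 \<or> phixF \<tau> x0 \<sigma> \<epsilon> p \<noteq> 0" "\<epsilon> > 0"
  shows "\<bar>fst p - \<tau>\<bar> < \<epsilon> \<and> \<bar>snd p - x0 - \<sigma> * (fst p - \<tau>)\<bar> < \<epsilon>"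
proof -
  have "\<not> 1 \<le> \<bar>(fst p - \<tau>) / \<epsilon>\<bar>" "\<not> 1 \<le> \<bar>(snd p - x0 - \<sigma> * (fst p - \<tau>)) / \<epsilon>\<bar>"
    using assms bump_out unfolding phiF_def phitF_def phixF_def by fastforce+
  then show ?thesis using assms(2) by (auto simp: abs_divide)
qed

lemma phiF_test:
  assumes e: "\<epsilon> > 0"
  shows "test_fun (phiF \<tau> x0 \<sigma> \<epsilon>) (phitF \<tau> x0 \<sigma> \<epsilon>) (phixF \<tau> x0 \<sigma> \<epsilon>)"
  unfolding test_fun_def
proof (intro conjI allI)
  fix p :: "real \<times> real"
  show "(phiF \<tau> x0 \<sigma> \<epsilon> has_derivative (\<lambda>(h, k). phitF \<tau> x0 \<sigma> \<epsilon> p * h + phixF \<tau> x0 \<sigma> \<epsilon> p * k)) (at p)"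
    unfolding phiF_def[abs_def]
    apply (rule has_derivative_eq_rhs)
     apply (rule has_derivative_mult)
      apply (rule DERIV_compose_FDERIV[OF bump_deriv])
      apply (insert e, auto intro!: derivative_eq_intros)[1]
     apply (rule DERIV_compose_FDERIV[OF bump_deriv])
     apply (insert e, auto intro!: derivative_eq_intros)[1]
    apply (insert e, auto simp: phitF_def phixF_def fun_eq_iff algebra_simps diff_divide_distrib add_divide_distrib)
    done
  show "continuous_on UNIV (phitF \<tau> x0 \<sigma> \<epsilon>)" unfolding phitF_def[abs_def]
    using e by (intro continuous_intros) auto
  show "continuous_on UNIV (phixF \<tau> x0 \<sigma> \<epsilon>)" unfolding phixF_def[abs_def]
    using e by (intro continuous_intros) auto
  show "0 \<le> phiF \<tau> x0 \<sigma> \<epsilon> p" by (simp add: phiF_def bump_nonneg)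
  have "{p. phiF \<tau> x0 \<sigma> \<epsilon> p \<noteq> 0} \<subseteq> cball (\<tau>, x0) (\<epsilon> + (\<epsilon> + \<bar>\<sigma>\<bar> * \<epsilon>))"
  proof
    fix p assume "p \<in> {p. phiF \<tau> x0 \<sigma> \<epsilon> p \<noteq> 0}"
    then have h: "\<bar>fst p - \<tau>\<bar> < \<epsilon>" "\<bar>snd p - x0 - \<sigma> * (fst p - \<tau>)\<bar> < \<epsilon>" using phiF_support[of \<tau> x0 \<sigma> \<epsilon> p] e by auto
    have "\<bar>\<sigma> * (fst p - \<tau>)\<bar> \<le> \<bar>\<sigma>\<bar> * \<epsilon>" using h(1) by (simp add: abs_mult mult_left_mono)
    then have h2: "\<bar>snd p - x0\<bar> \<le> \<epsilon> + \<bar>\<sigma>\<bar> * \<epsilon>" using h(2) by linarith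
    have "dist p (\<tau>, x0) \<le> \<bar>fst p - \<tau>\<bar> + \<bar>snd p - x0\<bar>"
      by (cases p) (simp add: dist_Pair_Pair dist_real_def sqrt_sum_squares_le_sum_abs)
    then show "p \<in> cball (\<tau>, x0) (\<epsilon> + (\<epsilon> + \<bar>\<sigma>\<bar> * \<epsilon>))" using h(1) h2 by (auto simp: dist_commute)
  qed
  then show "bounded {p. phiF \<tau> x0 \<sigma> \<epsilon> p \<noteq> 0}" by (rule bounded_subset[OF bounded_cball])
qed

lemma integrable_supp:
  fixes g :: "real \<Rightarrow> real"
  assumes "g \<in> borel_measurable lborel" "\<And>x. \<bar>g x\<bar> \<le> C * indicator {a..b} x"
  shows "integrable lborel g"
proof -
  have i: "integrable lborel (\<lambda>x. C * indicator {a..b} x :: real)"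
    by (intro integrable_mult_right) (simp add: integrable_indicator_iff emeasure_lborel_Icc_eq)
  have "AE x in lborel. norm (g x) \<le> norm (C * indicator {a..b} x :: real)"
    using assms(2) by (intro always_eventually allI) (metis abs_ge_self order_trans real_norm_def)
  from Bochner_Integration.integrable_bound[OF i assms(1) this] show ?thesis .
qed

lemma FTC_bump:
  assumes "a \<le> b"
  shows "(\<integral>x. indicator {a..b} x * dbump x \<partial>lborel) = bump b - bump a"
proof -
  have "(\<integral>x. indicator {a..b} x *\<^sub>R dbump x \<partial>lborel) = bump b - bump a"
  proof (rule integral_FTC_atLeastAtMost[OF assms])
    fix x show "(bump has_vector_derivative dbump x) (at x within {a..b})"
      using bump_deriv[of x] by (simp add: has_real_derivative_iff_has_vector_derivative has_vector_derivative_at_within)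
    show "continuous_on {a..b} dbump" using cont_dbump continuous_on_subset by blast
  qed
  then show ?thesis by simp
qed

lemma int_dbumpL: "(\<integral>x. indicator {-1..0} x * dbump x \<partial>lborel) = 1"
  using FTC_bump[of "-1" 0] bump_out[of "-1"] by (simp add: bump0)
lemma int_dbumpR: "(\<integral>x. indicator {0..1} x * dbump x \<partial>lborel) = -1"
  using FTC_bump[of 0 1] bump_out[of "1"] by (simp add: bump0)

lemma dbump_ind: "dbump x = indicator {-1..1} x * dbump x"
  using bump_out[of x] by (cases "\<bar>x\<bar> < 1") (auto simp: indicator_def abs_le_iff)
lemma int_dbump: "(\<integral>x. dbump x \<partial>lborel) = 0"
  using FTC_bump[of "-1" 1] bump_out[of "-1"] bump_out[of 1] dbump_ind by simp

lemma bump_poly: "bump x = indicator {-1..1} x * (1 - 2 * x^2 + x^4)"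
proof (cases "\<bar>x\<bar> < 1")
  case True
  then have "x^2 \<le> 1" by (simp add: abs_square_le_1)
  then have m: "max 0 (1 - x^2) = 1 - x^2" by simp
  have ind: "indicator {-1..1} x = (1::real)" using True by (auto simp: abs_less_iff)
  show ?thesis unfolding bump_alt m ind by (simp add: power2_eq_square power4_eq_xxxx algebra_simps)
next
  case False
  show ?thesis
  proof (cases "\<bar>x\<bar> = 1")
    case True
    then have "x = 1 \<or> x = -1" by auto
    then show ?thesis using bump_out[of x] by auto
  next
    case F: False
    then show ?thesis using False bump_out[of x] by (auto simp: indicator_def abs_le_iff)
  qed
qed

lemma int_bump: "(\<integral>x. bump x \<partial>lborel) = 16/15"
proof -
  define F where "F x = x - 2/3 * x^3 + x^5/5" for x :: real
  have "(\<integral>x. indicator {-1..1} x *\<^sub>R (1 - 2 * x^2 + x^4) \<partial>lborel) = F 1 - F (-1)"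
  proof (rule integral_FTC_atLeastAtMost)
    fix x
    have d3: "((\<lambda>x. x^3) has_real_derivative real 3 * x^(3 - Suc 0)) (at x)" by (rule DERIV_pow)
    have d5: "((\<lambda>x. x^5) has_real_derivative real 5 * x^(5 - Suc 0)) (at x)" by (rule DERIV_pow)
    have "(F has_real_derivative (1 - 2/3 * (real 3 * x^(3 - Suc 0)) + (real 5 * x^(5 - Suc 0)) / 5)) (at x)"
      unfolding F_def[abs_def] by (intro DERIV_add DERIV_diff DERIV_ident DERIV_cmult DERIV_cdivide d3 d5)
    then have "(F has_real_derivative (1 - 2 * x^2 + x^4)) (at x)"
      by (rule DERIV_cong) simp
    then show "(F has_vector_derivative (1 - 2 * x^2 + x^4)) (at x within {-1..1})"
      by (simp add: has_real_derivative_iff_has_vector_derivative has_vector_derivative_at_within)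
    show "continuous_on {-1..1} (\<lambda>x::real. 1 - 2 * x^2 + x^4)" by (intro continuous_intros)
  qed simp
  then show ?thesis by (simp add: bump_poly F_def)
qed

lemma integrable_bump: "integrable lborel bump"
  by (rule integrable_supp[where C=1 and a="-1" and b=1]) (use bump_le1 bump_nonneg bump_out in \<open>auto simp: indicator_def abs_le_iff\<close>)
lemma integrable_dbump: "integrable lborel dbump"
  by (rule integrable_supp[where C=4 and a="-1" and b=1]) (use dbump_bound bump_out in \<open>auto simp: indicator_def abs_le_iff\<close>)

lemma q_cont:
  fixes f :: "real \<Rightarrow> real"
  assumes fc: "continuous_on UNIV f"
  shows "isCont (\<lambda>v. sgn (v - c) * (f v - f c)) v0"
proof -
  have fC: "isCont f x" for x using fc by (simp add: continuous_on_eq_continuous_at)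
  show ?thesis
  proof (cases "v0 = c")
    case False
    then show ?thesis using fC by (intro continuous_intros) auto
  next
    case True
    have "((\<lambda>v. sgn (v - c) * (f v - f c)) \<longlongrightarrow> 0) (at c)"
    proof (rule tendsto_0_le[where f="\<lambda>v. f v - f c" and K=1])
      show "((\<lambda>v. f v - f c) \<longlongrightarrow> 0) (at c)"
        using fC[of c] unfolding isCont_def by (metis LIM_zero)
      show "\<forall>\<^sub>F x in at c. norm (sgn (x - c) * (f x - f c)) \<le> norm (f x - f c) * 1"
        by (intro always_eventually allI) (auto simp: abs_mult abs_sgn_eq)
    qed
    then show ?thesis using True by (simp add: isCont_def)
  qed
qed

definition GG :: "(real \<Rightarrow> real) \<Rightarrow> real \<Rightarrow> real \<Rightarrow> real \<Rightarrow> real \<Rightarrow> real \<Rightarrow> real" where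
  "GG f c \<sigma> s w v = dbump s * bump w * \<bar>v - c\<bar> + bump s * dbump w * (sgn (v - c) * (f v - f c) - \<sigma> * \<bar>v - c\<bar>)"

definition KK :: "(real \<Rightarrow> real) \<Rightarrow> (real \<times> real \<Rightarrow> real) \<Rightarrow> real \<Rightarrow> real \<Rightarrow> real \<Rightarrow> real \<Rightarrow> real \<Rightarrow> real \<times> real \<Rightarrow> real" where
  "KK f u c \<tau> x0 \<sigma> \<epsilon> p = indicator {p. fst p > 0} p *
      (phitF \<tau> x0 \<sigma> \<epsilon> p * \<bar>u p - c\<bar> + phixF \<tau> x0 \<sigma> \<epsilon> p * sgn (u p - c) * (f (u p) - f c))"

lemma abs_bound2:
  fixes a b c d :: real
  assumes "\<bar>a\<bar> \<le> A" "\<bar>b\<bar> \<le> B" "\<bar>c\<bar> \<le> C" "\<bar>d\<bar> \<le> D"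
  shows "\<bar>a * b + c * d\<bar> \<le> A * B + C * D"
proof -
  have "\<bar>a * b\<bar> \<le> A * B" unfolding abs_mult by (rule mult_mono) (use assms in auto)
  moreover have "\<bar>c * d\<bar> \<le> C * D" unfolding abs_mult by (rule mult_mono) (use assms in auto)
  ultimately show ?thesis by (meson abs_triangle_ineq add_mono order_trans)
qed

lemma KK_point:
  assumes e: "0 < \<epsilon>" "\<epsilon> < \<tau>"
  shows "KK f u c \<tau> x0 \<sigma> \<epsilon> (\<tau> + \<epsilon> * s, x0 + \<sigma> * (\<tau> + \<epsilon> * s - \<tau>) + \<epsilon> * w)
       = GG f c \<sigma> s w (u (\<tau> + \<epsilon> * s, x0 + \<sigma> * (\<epsilon> * s) + \<epsilon> * w)) / \<epsilon>"
proof -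
  have a1: "(\<tau> + \<epsilon> * s - \<tau>) / \<epsilon> = s" using e by simp
  have a2: "(x0 + \<sigma> * (\<tau> + \<epsilon> * s - \<tau>) + \<epsilon> * w - x0 - \<sigma> * (\<tau> + \<epsilon> * s - \<tau>)) / \<epsilon> = w" using e by simp
  have a3: "\<tau> + \<epsilon> * s - \<tau> = \<epsilon> * s" by simp
  show ?thesis
  proof (cases "1 \<le> \<bar>s\<bar>")
    case True
    then show ?thesis using bump_out[of s]
      unfolding KK_def phitF_def phixF_def GG_def fst_conv snd_conv a1 a2 by simp
  next
    case False
    then have "- 1 < s" by auto
    then have "- \<epsilon> < \<epsilon> * s" using e(1) by (metis mult.commute mult_minus_left mult_less_cancel_left_pos mult_1)
    then have pos: "0 < \<tau> + \<epsilon> * s" using e by linarith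
    show ?thesis
      unfolding KK_def phitF_def phixF_def GG_def fst_conv snd_conv a1 a2 a3
      using pos e by (simp add: field_simps)
  qed
qed

lemma f_bounded_on:
  fixes f :: "real \<Rightarrow> real"
  assumes fc: "continuous_on UNIV f"
  obtains B where "\<And>v. \<bar>v\<bar> \<le> R \<Longrightarrow> \<bar>f v\<bar> \<le> B" "0 \<le> B"
proof -
  have "compact (f ` {-R..R})"
    by (rule compact_continuous_image[OF continuous_on_subset[OF fc] compact_Icc]) auto
  then obtain B where B: "\<And>y. y \<in> f ` {-R..R} \<Longrightarrow> norm y \<le> B"
    using compact_imp_bounded bounded_iff by metis
  have "\<bar>f v\<bar> \<le> \<bar>B\<bar>" if "\<bar>v\<bar> \<le> R" for v using B[of "f v"] that by force
  then show ?thesis using that[of "\<bar>B\<bar>"] by auto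
qed

lemma KK_bound:
  assumes e: "0 < \<epsilon>"
    and Fb: "\<And>v. \<bar>v\<bar> \<le> Mu \<Longrightarrow> \<bar>f v\<bar> \<le> Fb" "0 \<le> Fb"
    and u: "fst p > 0 \<longrightarrow> \<bar>u p\<bar> \<le> Mu"
  shows "\<bar>KK f u c \<tau> x0 \<sigma> \<epsilon> p\<bar> \<le>
     ((4/\<epsilon> + \<bar>\<sigma>\<bar>/\<epsilon>*4) * (\<bar>Mu\<bar> + \<bar>c\<bar>) + 4/\<epsilon> * (Fb + \<bar>f c\<bar>)) *
     indicator (cbox (\<tau> - \<epsilon>, x0 - \<epsilon> - \<bar>\<sigma>\<bar> * \<epsilon>) (\<tau> + \<epsilon>, x0 + \<epsilon> + \<bar>\<sigma>\<bar> * \<epsilon>)) p"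
  (is "_ \<le> ?C * indicator ?R p")
proof -
  have C0: "0 \<le> ?C" using e Fb(2) by (intro add_nonneg_nonneg mult_nonneg_nonneg) auto
  show ?thesis
  proof (cases "fst p > 0 \<and> (phitF \<tau> x0 \<sigma> \<epsilon> p \<noteq> 0 \<or> phixF \<tau> x0 \<sigma> \<epsilon> p \<noteq> 0)")
    case False
    then have "KK f u c \<tau> x0 \<sigma> \<epsilon> p = 0" unfolding KK_def by auto
    then show ?thesis using C0 by simp
  next
    case True
    then have h: "\<bar>fst p - \<tau>\<bar> < \<epsilon>" "\<bar>snd p - x0 - \<sigma> * (fst p - \<tau>)\<bar> < \<epsilon>"
      using phiF_support[of \<tau> x0 \<sigma> \<epsilon> p] e by auto
    have "\<bar>\<sigma> * (fst p - \<tau>)\<bar> \<le> \<bar>\<sigma>\<bar> * \<epsilon>" using h(1) by (simp add: abs_mult mult_left_mono)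
    then have h2: "\<bar>snd p - x0\<bar> \<le> \<epsilon> + \<bar>\<sigma>\<bar> * \<epsilon>" using h(2) by linarith
    have inR: "p \<in> ?R" using h(1) h2 by (cases p) (auto simp: cbox_Pair_iff abs_le_iff)
    have up: "\<bar>u p\<bar> \<le> Mu" using u True by auto
    have b1: "\<bar>phitF \<tau> x0 \<sigma> \<epsilon> p\<bar> \<le> 4/\<epsilon> + \<bar>\<sigma>\<bar>/\<epsilon>*4"
    proof -
      let ?a = "dbump ((fst p - \<tau>) / \<epsilon>)" and ?b = "bump ((snd p - x0 - \<sigma> * (fst p - \<tau>)) / \<epsilon>)"
      let ?c = "bump ((fst p - \<tau>) / \<epsilon>)" and ?d = "dbump ((snd p - x0 - \<sigma> * (fst p - \<tau>)) / \<epsilon>)"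
      have "\<bar>?a / \<epsilon> * ?b\<bar> \<le> 4 / \<epsilon> * 1"
        unfolding abs_mult abs_divide using e
        by (intro mult_mono divide_right_mono) (auto simp: dbump_bound bump_le1 bump_nonneg intro!: divide_right_mono)
      moreover have "\<bar>\<sigma> / \<epsilon> * ?c * ?d\<bar> \<le> \<bar>\<sigma>\<bar> / \<epsilon> * 1 * 4"
        unfolding abs_mult abs_divide using e
        by (intro mult_mono) (auto simp: dbump_bound bump_le1 bump_nonneg)
      ultimately show ?thesis unfolding phitF_def by (smt (verit))
    qed
    have b2: "\<bar>phixF \<tau> x0 \<sigma> \<epsilon> p\<bar> \<le> 4/\<epsilon>"
    proof -
      have "\<bar>bump ((fst p - \<tau>) / \<epsilon>) * dbump ((snd p - x0 - \<sigma> * (fst p - \<tau>)) / \<epsilon>)\<bar> \<le> 1 * 4"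
        unfolding abs_mult by (intro mult_mono) (auto simp: dbump_bound bump_le1 bump_nonneg)
      then show ?thesis unfolding phixF_def abs_divide using e by (simp add: divide_right_mono)
    qed
    have b3: "\<bar>\<bar>u p - c\<bar>\<bar> \<le> \<bar>Mu\<bar> + \<bar>c\<bar>" using up by auto
    have b4: "\<bar>sgn (u p - c) * (f (u p) - f c)\<bar> \<le> Fb + \<bar>f c\<bar>"
    proof -
      have "\<bar>sgn (u p - c) * (f (u p) - f c)\<bar> \<le> \<bar>f (u p) - f c\<bar>" by (simp add: abs_mult abs_sgn_eq)
      also have "\<dots> \<le> Fb + \<bar>f c\<bar>" using Fb(1)[OF up] by linarith
      finally show ?thesis .
    qed
    have "\<bar>KK f u c \<tau> x0 \<sigma> \<epsilon> p\<bar> = \<bar>phitF \<tau> x0 \<sigma> \<epsilon> p * \<bar>u p - c\<bar> + phixF \<tau> x0 \<sigma> \<epsilon> p * (sgn (u p - c) * (f (u p) - f c))\<bar>"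
      using True unfolding KK_def by (simp add: mult.assoc)
    also have "\<dots> \<le> ?C" by (rule abs_bound2[OF b1 b3 b2 b4])
    finally show ?thesis using inR by simp
  qed
qed

lemma kruz_scaled:
  fixes f :: "real \<Rightarrow> real" and u :: "real \<times> real \<Rightarrow> real"
  assumes sol: "kruzkov_solution f u0 u" and fc: "continuous_on UNIV f" and e: "0 < \<epsilon>" "\<epsilon> < \<tau>"
  shows "0 \<le> (\<integral>s. (\<integral>w. GG f c \<sigma> s w (u (\<tau> + \<epsilon> * s, x0 + \<sigma> * (\<epsilon> * s) + \<epsilon> * w)) \<partial>lborel) \<partial>lborel)"
proof -
  from sol have umeas[measurable]: "u \<in> borel_measurable lborel"
    and Mex: "\<exists>M. AE p in lborel. fst p > 0 \<longrightarrow> \<bar>u p\<bar> \<le> M"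
    and ineq: "\<And>c phi phit phix. test_fun phi phit phix \<Longrightarrow>
        0 \<le> (\<integral>p. indicator {p. fst p > 0} p *
                 (phit p * \<bar>u p - c\<bar> + phix p * sgn (u p - c) * (f (u p) - f c)) \<partial>lborel)
           + (\<integral>x. phi (0, x) * \<bar>u0 x - c\<bar> \<partial>lborel)"
    unfolding kruzkov_solution_def by blast+
  obtain M where M: "AE p in lborel. fst p > 0 \<longrightarrow> \<bar>u p\<bar> \<le> M" using Mex by blast
  have fmeas[measurable]: "f \<in> borel_measurable borel" by (rule borel_measurable_continuous_onI[OF fc])
  obtain Fb where Fb: "\<And>v. \<bar>v\<bar> \<le> M \<Longrightarrow> \<bar>f v\<bar> \<le> Fb" "0 \<le> Fb"
    using f_bounded_on[OF fc, of M] by blast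
  let ?K = "KK f u c \<tau> x0 \<sigma> \<epsilon>"
  have phi0: "phiF \<tau> x0 \<sigma> \<epsilon> (0, x) = 0" for x
  proof -
    have "1 \<le> \<bar>(0 - \<tau>) / \<epsilon>\<bar>" using e by (simp add: abs_divide)
    then show ?thesis unfolding phiF_def using bump_out by simp
  qed
  have "0 \<le> (\<integral>p. ?K p \<partial>lborel)"
    using ineq[of "phiF \<tau> x0 \<sigma> \<epsilon>" "phitF \<tau> x0 \<sigma> \<epsilon>" "phixF \<tau> x0 \<sigma> \<epsilon>" c, OF phiF_test[OF e(1)]] unfolding KK_def phi0 by simp
  have tf: "test_fun (phiF \<tau> x0 \<sigma> \<epsilon>) (phitF \<tau> x0 \<sigma> \<epsilon>) (phixF \<tau> x0 \<sigma> \<epsilon>)"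
    by (rule phiF_test[OF e(1)])
  have [measurable]: "phitF \<tau> x0 \<sigma> \<epsilon> \<in> borel_measurable borel" "phixF \<tau> x0 \<sigma> \<epsilon> \<in> borel_measurable borel"
    using tf unfolding test_fun_def by (auto intro: borel_measurable_continuous_onI)
  have "open {p::real\<times>real. 0 < fst p}" by (intro open_Collect_less continuous_intros)
  then have [measurable]: "{p::real\<times>real. 0 < fst p} \<in> sets borel" by (rule borel_open)
  have Kmeas: "?K \<in> borel_measurable lborel"
    unfolding KK_def[abs_def] by measurable
  let ?C = "((4/\<epsilon> + \<bar>\<sigma>\<bar>/\<epsilon>*4) * (\<bar>M\<bar> + \<bar>c\<bar>) + 4/\<epsilon> * (Fb + \<bar>f c\<bar>))"
  let ?R = "cbox (\<tau> - \<epsilon>, x0 - \<epsilon> - \<bar>\<sigma>\<bar> * \<epsilon>) (\<tau> + \<epsilon>, x0 + \<epsilon> + \<bar>\<sigma>\<bar> * \<epsilon>)"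
  have intR: "integrable lborel (\<lambda>p. ?C * indicator ?R p :: real)"
    apply (intro integrable_mult_right)
    apply (subst integrable_indicator_iff)
    using emeasure_lborel_cbox_finite by auto
  have "AE p in lborel. norm (?K p) \<le> norm (?C * indicator ?R p :: real)"
    using M
  proof eventually_elim
    case (elim p)
    have "\<bar>?K p\<bar> \<le> ?C * indicator ?R p" by (rule KK_bound[where f=f and Mu=M and Fb=Fb and u=u, OF e(1) Fb elim])
    then show ?case unfolding real_norm_def by (rule order_trans[OF _ abs_ge_self])
  qed
  from Bochner_Integration.integrable_bound[OF intR Kmeas this]
  have intK: "integrable lborel ?K" .
  then have intK2: "integrable (lborel \<Otimes>\<^sub>M lborel) ?K" by (simp add: lborel_prod)
  have "(\<integral>p. ?K p \<partial>lborel) = (\<integral>t. (\<integral>x. ?K (t, x) \<partial>lborel) \<partial>lborel)"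
    using lborel_pair.integral_fst'[OF intK2] by (simp add: lborel_prod)
  also have "\<dots> = (\<integral>t. \<epsilon> * (\<integral>w. ?K (t, x0 + \<sigma> * (t - \<tau>) + \<epsilon> * w) \<partial>lborel) \<partial>lborel)"
  proof (rule Bochner_Integration.integral_cong[OF refl])
    fix t
    show "(\<integral>x. ?K (t, x) \<partial>lborel) = \<epsilon> * (\<integral>w. ?K (t, x0 + \<sigma> * (t - \<tau>) + \<epsilon> * w) \<partial>lborel)"
      using lborel_integral_real_affine[where c=\<epsilon> and t="x0 + \<sigma> * (t - \<tau>)" and f="\<lambda>x. ?K (t, x)"] e
      by simp
  qed
  also have "\<dots> = \<epsilon> * (\<integral>s. \<epsilon> * (\<integral>w. ?K (\<tau> + \<epsilon> * s, x0 + \<sigma> * (\<tau> + \<epsilon> * s - \<tau>) + \<epsilon> * w) \<partial>lborel) \<partial>lborel)"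
    using lborel_integral_real_affine[where c=\<epsilon> and t="\<tau>" and
        f="\<lambda>t. \<epsilon> * (\<integral>w. ?K (t, x0 + \<sigma> * (t - \<tau>) + \<epsilon> * w) \<partial>lborel)"] e
    by simp
  also have "\<dots> = \<epsilon> * (\<integral>s. (\<integral>w. GG f c \<sigma> s w (u (\<tau> + \<epsilon> * s, x0 + \<sigma> * (\<epsilon> * s) + \<epsilon> * w)) \<partial>lborel) \<partial>lborel)"
    unfolding KK_point[OF e] using e by simp
  finally show ?thesis using \<open>0 \<le> (\<integral>p. ?K p \<partial>lborel)\<close> e by (simp add: zero_le_mult_iff)
qed

lemma deriv_bound:
  assumes gd: "(\<gamma> has_real_derivative \<sigma>) (at \<tau>)" and eta: "\<eta> > 0"
  shows "\<exists>\<delta>>0. \<forall>h. \<bar>h\<bar> < \<delta> \<longrightarrow> \<bar>\<gamma> (\<tau> + h) - \<gamma> \<tau> - \<sigma> * h\<bar> \<le> \<eta> * \<bar>h\<bar>"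
proof -
  have "((\<lambda>h. (\<gamma> (\<tau> + h) - \<gamma> \<tau>) / h) \<longlongrightarrow> \<sigma>) (at 0)" using gd by (simp add: DERIV_def)
  from LIM_D[OF this eta] obtain \<delta> where d: "\<delta> > 0"
    "\<And>h. h \<noteq> 0 \<and> norm (h - 0) < \<delta> \<longrightarrow> norm ((\<gamma> (\<tau> + h) - \<gamma> \<tau>) / h - \<sigma>) < \<eta>" by blast
  have "\<bar>\<gamma> (\<tau> + h) - \<gamma> \<tau> - \<sigma> * h\<bar> \<le> \<eta> * \<bar>h\<bar>" if h: "\<bar>h\<bar> < \<delta>" for h
  proof (cases "h = 0")
    case False
    have "\<bar>\<gamma> (\<tau> + h) - \<gamma> \<tau> - \<sigma> * h\<bar> = \<bar>h\<bar> * \<bar>(\<gamma> (\<tau> + h) - \<gamma> \<tau>) / h - \<sigma>\<bar>"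
      using False by (simp add: abs_mult[symmetric] field_simps)
    also have "\<dots> \<le> \<bar>h\<bar> * \<eta>" using d(2)[of h] False h by (intro mult_left_mono) auto
    finally show ?thesis by (simp add: mult.commute)
  qed simp
  then show ?thesis using d(1) by blast
qed

lemma eps_small:
  assumes "(e0::real) > 0" "r > 0"
  shows "eventually (\<lambda>n. e0 / real (Suc n) < r) sequentially"
proof -
  obtain N :: nat where N: "e0 / r < real N" using reals_Archimedean2 by blast
  have "e0 / real (Suc n) < r" if "n \<ge> N" for n
  proof -
    have "e0 / r < real (Suc n)" using N that by linarith
    then have "e0 < r * real (Suc n)" using assms(2) by (simp add: field_simps)
    then show ?thesis by (simp add: field_simps)
  qed
  then show ?thesis unfolding eventually_sequentially by blast
qed

lemma GG_zero:
  assumes "1 \<le> \<bar>s\<bar> \<or> 1 \<le> \<bar>w\<bar>"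
  shows "GG f c \<sigma> s w v = 0"
  using assms bump_out[of s] bump_out[of w] unfolding GG_def by auto

lemma GG_bound:
  assumes "\<bar>v\<bar> \<le> Kb" "\<And>v. \<bar>v\<bar> \<le> Kb \<Longrightarrow> \<bar>f v\<bar> \<le> Fb"
  shows "\<bar>GG f c \<sigma> s w v\<bar> \<le> 4 * (Kb + \<bar>c\<bar>) + 4 * ((Fb + \<bar>f c\<bar>) + \<bar>\<sigma>\<bar> * (Kb + \<bar>c\<bar>))"
proof -
  have b1: "\<bar>dbump s * bump w\<bar> \<le> 4" unfolding abs_mult
    using mult_mono[OF dbump_bound[of s] bump_le1[of w]] bump_nonneg[of w] by simp
  have b2: "\<bar>bump s * dbump w\<bar> \<le> 4" unfolding abs_mult
    using mult_mono[OF bump_le1[of s] dbump_bound[of w]] bump_nonneg[of s] by simp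
  have b3: "\<bar>\<bar>v - c\<bar>\<bar> \<le> Kb + \<bar>c\<bar>" using assms(1) by auto
  have b4: "\<bar>sgn (v - c) * (f v - f c) - \<sigma> * \<bar>v - c\<bar>\<bar> \<le> (Fb + \<bar>f c\<bar>) + \<bar>\<sigma>\<bar> * (Kb + \<bar>c\<bar>)"
  proof -
    have "\<bar>sgn (v - c) * (f v - f c)\<bar> \<le> \<bar>f v - f c\<bar>" by (simp add: abs_mult abs_sgn_eq)
    also have "\<dots> \<le> Fb + \<bar>f c\<bar>" using assms(2)[OF assms(1)] by linarith
    finally have 1: "\<bar>sgn (v - c) * (f v - f c)\<bar> \<le> Fb + \<bar>f c\<bar>" .
    have 2: "\<bar>\<sigma> * \<bar>v - c\<bar>\<bar> \<le> \<bar>\<sigma>\<bar> * (Kb + \<bar>c\<bar>)" unfolding abs_mult using b3 by (intro mult_left_mono) auto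
    show ?thesis using 1 2 by linarith
  qed
  show ?thesis unfolding GG_def using abs_bound2[OF b1 b3 b2 b4] by (simp add: mult.assoc)
qed

lemma GG_cont_aux:
  fixes q :: "real \<Rightarrow> real"
  shows "isCont q v0 \<Longrightarrow> isCont (\<lambda>v. A * \<bar>v - c\<bar> + B * (q v - \<sigma> * \<bar>v - c\<bar>)) v0"
  by (intro continuous_intros)

lemma GG_cont:
  assumes fc: "continuous_on UNIV f"
  shows "isCont (GG f c \<sigma> s w) v0"
proof -
  have "isCont (\<lambda>v. sgn (v - c) * (f v - f c)) v0" by (rule q_cont[OF fc])
  from GG_cont_aux[OF this] show ?thesis unfolding GG_def[abs_def] .
qed

lemma comp_meas:
  fixes u :: "real \<times> real \<Rightarrow> real" and g :: "'a::euclidean_space \<Rightarrow> real \<times> real"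
  assumes u: "u \<in> borel_measurable lborel" and g: "continuous_on UNIV g"
  shows "(\<lambda>x. u (g x)) \<in> borel_measurable lborel"
proof -
  have u': "u \<in> borel_measurable borel" using u by (simp add: measurable_lborel1)
  have "g \<in> borel \<rightarrow>\<^sub>M borel" by (rule borel_measurable_continuous_onI[OF g])
  then have "(\<lambda>x. u (g x)) \<in> borel_measurable borel" using u' by (rule measurable_compose)
  then show ?thesis by (simp add: measurable_lborel1)
qed

lemma GG_cont_gen:
  fixes q :: "real \<Rightarrow> real" and S W V :: "'a::topological_space \<Rightarrow> real"
  assumes "continuous_on UNIV q" "continuous_on UNIV S" "continuous_on UNIV W" "continuous_on UNIV V"
  shows "continuous_on UNIV (\<lambda>x. dbump (S x) * bump (W x) * \<bar>V x - c\<bar> + bump (S x) * dbump (W x) * (q (V x) - \<sigma> * \<bar>V x - c\<bar>))"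
proof -
  have "continuous_on UNIV (\<lambda>x. q (V x))" using continuous_on_compose2[OF assms(1) assms(4)] by auto
  then show ?thesis using assms(2-4) by (intro continuous_intros)
qed

lemma q_cont_on:
  fixes f :: "real \<Rightarrow> real"
  assumes "continuous_on UNIV f" shows "continuous_on UNIV (\<lambda>v. sgn (v - c) * (f v - f c))"
  using q_cont[OF assms] by (simp add: continuous_on_eq_continuous_at)

lemma GG_meas:
  fixes g :: "'a::euclidean_space \<Rightarrow> real" and S W :: "'a \<Rightarrow> real"
  assumes fc: "continuous_on UNIV f" and g: "g \<in> borel_measurable lborel"
    and S: "continuous_on UNIV S" and W: "continuous_on UNIV W"
  shows "(\<lambda>x. GG f c \<sigma> (S x) (W x) (g x)) \<in> borel_measurable lborel"
proof -
  have "continuous_on UNIV (\<lambda>x. dbump (S (fst x)) * bump (W (fst x)) * \<bar>snd x - c\<bar> +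
      bump (S (fst x)) * dbump (W (fst x)) * ((\<lambda>v. sgn (v - c) * (f v - f c)) (snd x) - \<sigma> * \<bar>snd x - c\<bar>))"
    by (rule GG_cont_gen[OF q_cont_on[OF fc]])
      (auto intro!: continuous_intros continuous_on_compose2[OF S] continuous_on_compose2[OF W])
  then have "continuous_on UNIV (\<lambda>x. GG f c \<sigma> (S (fst x)) (W (fst x)) (snd x))"
    unfolding GG_def by simp
  then have "(\<lambda>x. GG f c \<sigma> (S (id x)) (W (id x)) (g x)) \<in> borel_measurable lborel"
    by (intro borel_measurable_continuous_Pair[where H="\<lambda>y v. GG f c \<sigma> (S y) (W y) v"] g) auto
  then show ?thesis by simp
qed

lemma small_facts:
  fixes \<epsilon> s w \<sigma> :: real
  assumes e: "0 < \<epsilon>" and s: "\<bar>s\<bar> < 1" and w: "\<bar>w\<bar> < 1"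
  shows "\<bar>\<epsilon> * s\<bar> \<le> \<epsilon>" "\<bar>\<sigma> * (\<epsilon> * s) + \<epsilon> * w\<bar> \<le> (1 + \<bar>\<sigma>\<bar>) * \<epsilon>"
proof -
  show 1: "\<bar>\<epsilon> * s\<bar> \<le> \<epsilon>" using e s by (simp add: abs_mult mult_left_le)
  have "\<bar>\<sigma> * (\<epsilon> * s)\<bar> \<le> \<bar>\<sigma>\<bar> * \<epsilon>" using 1 by (simp add: abs_mult mult_left_mono)
  moreover have "\<bar>\<epsilon> * w\<bar> \<le> \<epsilon>" using e w by (simp add: abs_mult mult_left_le)
  ultimately show "\<bar>\<sigma> * (\<epsilon> * s) + \<epsilon> * w\<bar> \<le> (1 + \<bar>\<sigma>\<bar>) * \<epsilon>" by (simp add: algebra_simps)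
qed

lemma point_tendsto_L:
  fixes u :: "real \<times> real \<Rightarrow> real"
  assumes gd: "(\<gamma> has_real_derivative \<sigma>) (at \<tau>)"
    and L: "\<And>e. e > 0 \<Longrightarrow> \<exists>d>0. \<forall>t x. \<bar>t - \<tau>\<bar> < d \<longrightarrow> \<bar>x - \<gamma> \<tau>\<bar> < d \<longrightarrow> x < \<gamma> t \<longrightarrow> \<bar>u (t, x) - a\<bar> < e"
    and e0: "0 < e0" and s: "\<bar>s\<bar> < 1" and w: "\<bar>w\<bar> < 1" "w < 0"
  shows "(\<lambda>n. u (\<tau> + e0 / real (Suc n) * s, \<gamma> \<tau> + \<sigma> * (e0 / real (Suc n) * s) + e0 / real (Suc n) * w)) \<longlonglongrightarrow> a"
proof (rule tendstoI)
  fix e :: real assume "e > 0"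
  from L[OF this] obtain d where d: "d > 0" "\<And>t x. \<bar>t - \<tau>\<bar> < d \<Longrightarrow> \<bar>x - \<gamma> \<tau>\<bar> < d \<Longrightarrow> x < \<gamma> t \<Longrightarrow> \<bar>u (t, x) - a\<bar> < e"
    by blast
  have "-w/2 > 0" using w by simp
  from deriv_bound[OF gd this] obtain \<delta> where dl: "\<delta> > 0"
    "\<And>h. \<bar>h\<bar> < \<delta> \<Longrightarrow> \<bar>\<gamma> (\<tau> + h) - \<gamma> \<tau> - \<sigma> * h\<bar> \<le> -w/2 * \<bar>h\<bar>" by blast
  have r: "min \<delta> (d / (2 + \<bar>\<sigma>\<bar>)) > 0" using dl d by simp
  show "eventually (\<lambda>n. dist (u (\<tau> + e0 / real (Suc n) * s, \<gamma> \<tau> + \<sigma> * (e0 / real (Suc n) * s) + e0 / real (Suc n) * w)) a < e) sequentially"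
    using eps_small[OF e0 r]
  proof eventually_elim
    case (elim n)
    define \<epsilon> where "\<epsilon> = e0 / real (Suc n)"
    have ep: "0 < \<epsilon>" using e0 by (simp add: \<epsilon>_def)
    have e1: "\<epsilon> < \<delta>" "\<epsilon> < d / (2 + \<bar>\<sigma>\<bar>)" using elim by (auto simp: \<epsilon>_def)
    then have e2: "\<epsilon> * (2 + \<bar>\<sigma>\<bar>) < d" by (simp add: pos_less_divide_eq add_pos_nonneg)
    note sf1 = small_facts(1)[OF ep s w(1)]
    note sf2 = small_facts(2)[OF ep s w(1), of \<sigma>]
    have h1: "\<bar>\<epsilon> * s\<bar> < \<delta>" using sf1 e1 by linarith
    have g: "\<bar>\<gamma> (\<tau> + \<epsilon> * s) - \<gamma> \<tau> - \<sigma> * (\<epsilon> * s)\<bar> \<le> -w/2 * \<bar>\<epsilon> * s\<bar>" by (rule dl(2)[OF h1])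
    have "-w/2 * \<bar>\<epsilon> * s\<bar> \<le> -w/2 * \<epsilon>" using sf1 w by (intro mult_left_mono) auto
    also have "\<dots> < - w * \<epsilon>" using ep w by (simp add: mult_strict_right_mono)
    finally have "-w/2 * \<bar>\<epsilon> * s\<bar> < - (\<epsilon> * w)" by (simp add: mult.commute)
    then have left: "\<gamma> \<tau> + \<sigma> * (\<epsilon> * s) + \<epsilon> * w < \<gamma> (\<tau> + \<epsilon> * s)" using g by linarith
    have ee: "\<epsilon> \<le> \<epsilon> * (2 + \<bar>\<sigma>\<bar>)" "(1 + \<bar>\<sigma>\<bar>) * \<epsilon> \<le> \<epsilon> * (2 + \<bar>\<sigma>\<bar>)"
      using ep by (simp_all add: algebra_simps)
    have t1: "\<bar>\<tau> + \<epsilon> * s - \<tau>\<bar> < d"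
    proof -
      have "\<bar>\<tau> + \<epsilon> * s - \<tau>\<bar> = \<bar>\<epsilon> * s\<bar>" by simp
      then show ?thesis using sf1 e2 ee by linarith
    qed
    have x1: "\<bar>\<gamma> \<tau> + \<sigma> * (\<epsilon> * s) + \<epsilon> * w - \<gamma> \<tau>\<bar> < d"
    proof -
      have "\<bar>\<gamma> \<tau> + \<sigma> * (\<epsilon> * s) + \<epsilon> * w - \<gamma> \<tau>\<bar> = \<bar>\<sigma> * (\<epsilon> * s) + \<epsilon> * w\<bar>" by simp
      then show ?thesis using sf2 e2 ee by linarith
    qed
    show ?case using d(2)[OF t1 x1 left] by (simp add: \<epsilon>_def dist_real_def)
  qed
qed

lemma point_tendsto_R:
  fixes u :: "real \<times> real \<Rightarrow> real"
  assumes gd: "(\<gamma> has_real_derivative \<sigma>) (at \<tau>)"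
    and R: "\<And>e. e > 0 \<Longrightarrow> \<exists>d>0. \<forall>t x. \<bar>t - \<tau>\<bar> < d \<longrightarrow> \<bar>x - \<gamma> \<tau>\<bar> < d \<longrightarrow> \<gamma> t < x \<longrightarrow> \<bar>u (t, x) - b\<bar> < e"
    and e0: "0 < e0" and s: "\<bar>s\<bar> < 1" and w: "\<bar>w\<bar> < 1" "w > 0"
  shows "(\<lambda>n. u (\<tau> + e0 / real (Suc n) * s, \<gamma> \<tau> + \<sigma> * (e0 / real (Suc n) * s) + e0 / real (Suc n) * w)) \<longlonglongrightarrow> b"
proof (rule tendstoI)
  fix e :: real assume "e > 0"
  from R[OF this] obtain d where d: "d > 0" "\<And>t x. \<bar>t - \<tau>\<bar> < d \<Longrightarrow> \<bar>x - \<gamma> \<tau>\<bar> < d \<Longrightarrow> \<gamma> t < x \<Longrightarrow> \<bar>u (t, x) - b\<bar> < e"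
    by blast
  have "w/2 > 0" using w by simp
  from deriv_bound[OF gd this] obtain \<delta> where dl: "\<delta> > 0"
    "\<And>h. \<bar>h\<bar> < \<delta> \<Longrightarrow> \<bar>\<gamma> (\<tau> + h) - \<gamma> \<tau> - \<sigma> * h\<bar> \<le> w/2 * \<bar>h\<bar>" by blast
  have r: "min \<delta> (d / (2 + \<bar>\<sigma>\<bar>)) > 0" using dl d by simp
  show "eventually (\<lambda>n. dist (u (\<tau> + e0 / real (Suc n) * s, \<gamma> \<tau> + \<sigma> * (e0 / real (Suc n) * s) + e0 / real (Suc n) * w)) b < e) sequentially"
    using eps_small[OF e0 r]
  proof eventually_elim
    case (elim n)
    define \<epsilon> where "\<epsilon> = e0 / real (Suc n)"
    have ep: "0 < \<epsilon>" using e0 by (simp add: \<epsilon>_def)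
    have e1: "\<epsilon> < \<delta>" "\<epsilon> < d / (2 + \<bar>\<sigma>\<bar>)" using elim by (auto simp: \<epsilon>_def)
    then have e2: "\<epsilon> * (2 + \<bar>\<sigma>\<bar>) < d" by (simp add: pos_less_divide_eq add_pos_nonneg)
    note sf1 = small_facts(1)[OF ep s w(1)]
    note sf2 = small_facts(2)[OF ep s w(1), of \<sigma>]
    have h1: "\<bar>\<epsilon> * s\<bar> < \<delta>" using sf1 e1 by linarith
    have g: "\<bar>\<gamma> (\<tau> + \<epsilon> * s) - \<gamma> \<tau> - \<sigma> * (\<epsilon> * s)\<bar> \<le> w/2 * \<bar>\<epsilon> * s\<bar>" by (rule dl(2)[OF h1])
    have "w/2 * \<bar>\<epsilon> * s\<bar> \<le> w/2 * \<epsilon>" using sf1 w by (intro mult_left_mono) auto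
    also have "\<dots> < w * \<epsilon>" using ep w by (simp add: mult_strict_right_mono)
    finally have "w/2 * \<bar>\<epsilon> * s\<bar> < \<epsilon> * w" by (simp add: mult.commute)
    then have right: "\<gamma> (\<tau> + \<epsilon> * s) < \<gamma> \<tau> + \<sigma> * (\<epsilon> * s) + \<epsilon> * w" using g by linarith
    have ee: "\<epsilon> \<le> \<epsilon> * (2 + \<bar>\<sigma>\<bar>)" "(1 + \<bar>\<sigma>\<bar>) * \<epsilon> \<le> \<epsilon> * (2 + \<bar>\<sigma>\<bar>)"
      using ep by (simp_all add: algebra_simps)
    have t1: "\<bar>\<tau> + \<epsilon> * s - \<tau>\<bar> < d"
    proof -
      have "\<bar>\<tau> + \<epsilon> * s - \<tau>\<bar> = \<bar>\<epsilon> * s\<bar>" by simp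
      then show ?thesis using sf1 e2 ee by linarith
    qed
    have x1: "\<bar>\<gamma> \<tau> + \<sigma> * (\<epsilon> * s) + \<epsilon> * w - \<gamma> \<tau>\<bar> < d"
    proof -
      have "\<bar>\<gamma> \<tau> + \<sigma> * (\<epsilon> * s) + \<epsilon> * w - \<gamma> \<tau>\<bar> = \<bar>\<sigma> * (\<epsilon> * s) + \<epsilon> * w\<bar>" by simp
      then show ?thesis using sf2 e2 ee by linarith
    qed
    show ?case using d(2)[OF t1 x1 right] by (simp add: \<epsilon>_def dist_real_def)
  qed
qed

lemma inner_bound:
  fixes f :: "real \<Rightarrow> real" and u :: "real \<times> real \<Rightarrow> real"
  assumes e: "0 < \<epsilon>" "\<epsilon> \<le> e0"
    and Kb: "\<And>t x. \<bar>t - \<tau>\<bar> < e0 * (2 + \<bar>\<sigma>\<bar>) \<Longrightarrow> \<bar>x - \<gamma> \<tau>\<bar> < e0 * (2 + \<bar>\<sigma>\<bar>) \<Longrightarrow> x \<noteq> \<gamma> t \<Longrightarrow> \<bar>u (t, x)\<bar> \<le> Kb"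
    and Fb: "\<And>v. \<bar>v\<bar> \<le> Kb \<Longrightarrow> \<bar>f v\<bar> \<le> Fb" and Kb0: "0 \<le> Kb" and Fb0: "0 \<le> Fb"
  shows "AE w in lborel. \<bar>GG f c \<sigma> s w (u (\<tau> + \<epsilon> * s, \<gamma> \<tau> + \<sigma> * (\<epsilon> * s) + \<epsilon> * w))\<bar>
      \<le> (4 * (Kb + \<bar>c\<bar>) + 4 * ((Fb + \<bar>f c\<bar>) + \<bar>\<sigma>\<bar> * (Kb + \<bar>c\<bar>))) * indicator {-1..1} w"
  using AE_lborel_singleton[of "(\<gamma> (\<tau> + \<epsilon> * s) - \<gamma> \<tau> - \<sigma> * (\<epsilon> * s)) / \<epsilon>"]
proof eventually_elim
  case (elim w)
  let ?C = "4 * (Kb + \<bar>c\<bar>) + 4 * ((Fb + \<bar>f c\<bar>) + \<bar>\<sigma>\<bar> * (Kb + \<bar>c\<bar>))"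
  have C0: "0 \<le> ?C" using Kb0 Fb0 by simp
  show ?case
  proof (cases "1 \<le> \<bar>s\<bar> \<or> 1 \<le> \<bar>w\<bar>")
    case True
    then show ?thesis using GG_zero C0 by simp
  next
    case False
    then have s: "\<bar>s\<bar> < 1" and w: "\<bar>w\<bar> < 1" by linarith+
    note sf1 = small_facts(1)[OF e(1) s w]
    note sf2 = small_facts(2)[OF e(1) s w, of \<sigma>]
    have m1: "(1 + \<bar>\<sigma>\<bar>) * \<epsilon> \<le> (1 + \<bar>\<sigma>\<bar>) * e0" using e by (intro mult_left_mono) auto
    have m2: "(1 + \<bar>\<sigma>\<bar>) * e0 < e0 * (2 + \<bar>\<sigma>\<bar>)" using e by (simp add: algebra_simps)
    have m3: "e0 * 1 \<le> e0 * (2 + \<bar>\<sigma>\<bar>)" using e by (intro mult_left_mono) auto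
    have ee: "\<epsilon> \<le> e0 * (2 + \<bar>\<sigma>\<bar>)" "(1 + \<bar>\<sigma>\<bar>) * \<epsilon> < e0 * (2 + \<bar>\<sigma>\<bar>)"
      using m1 m2 m3 e by linarith+
    have ne: "\<gamma> \<tau> + \<sigma> * (\<epsilon> * s) + \<epsilon> * w \<noteq> \<gamma> (\<tau> + \<epsilon> * s)"
    proof
      assume "\<gamma> \<tau> + \<sigma> * (\<epsilon> * s) + \<epsilon> * w = \<gamma> (\<tau> + \<epsilon> * s)"
      then have "w = (\<gamma> (\<tau> + \<epsilon> * s) - \<gamma> \<tau> - \<sigma> * (\<epsilon> * s)) / \<epsilon>" using e(1) by (simp add: field_simps)
      then show False using elim by simp
    qed
    have t1: "\<bar>\<tau> + \<epsilon> * s - \<tau>\<bar> < e0 * (2 + \<bar>\<sigma>\<bar>)"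
    proof -
      have "\<bar>\<tau> + \<epsilon> * s - \<tau>\<bar> = \<bar>\<epsilon> * s\<bar>" by simp
      moreover have "\<bar>\<epsilon> * s\<bar> < \<epsilon>" using e(1) s by (simp add: abs_mult)
      ultimately show ?thesis using ee by linarith
    qed
    have x1: "\<bar>\<gamma> \<tau> + \<sigma> * (\<epsilon> * s) + \<epsilon> * w - \<gamma> \<tau>\<bar> < e0 * (2 + \<bar>\<sigma>\<bar>)"
    proof -
      have "\<bar>\<gamma> \<tau> + \<sigma> * (\<epsilon> * s) + \<epsilon> * w - \<gamma> \<tau>\<bar> = \<bar>\<sigma> * (\<epsilon> * s) + \<epsilon> * w\<bar>" by simp
      then show ?thesis using sf2 ee(2) by linarith
    qed
    have "\<bar>u (\<tau> + \<epsilon> * s, \<gamma> \<tau> + \<sigma> * (\<epsilon> * s) + \<epsilon> * w)\<bar> \<le> Kb" by (rule Kb[OF t1 x1 ne])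
    then have "\<bar>GG f c \<sigma> s w (u (\<tau> + \<epsilon> * s, \<gamma> \<tau> + \<sigma> * (\<epsilon> * s) + \<epsilon> * w))\<bar> \<le> ?C"
      by (rule GG_bound[OF _ Fb])
    moreover have "indicator {-1..1} w = (1::real)" using w by (auto simp: abs_less_iff)
    ultimately show ?thesis by simp
  qed
qed

lemma integrable_Cind: fixes C :: real shows "integrable lborel (\<lambda>w::real. C * indicator {-1..1} w)"
  by (intro integrable_mult_right) (simp add: integrable_indicator_iff)

lemma integral_Cind: fixes C :: real shows "(\<integral>w. C * indicator {-1..1::real} w \<partial>lborel) = 2 * C"
  by simp

lemma Gu_meas:
  fixes f :: "real \<Rightarrow> real" and u :: "real \<times> real \<Rightarrow> real"
  assumes fc: "continuous_on UNIV f" and umeas: "u \<in> borel_measurable lborel"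
  shows "(\<lambda>w. GG f c \<sigma> s w (u (\<tau> + \<epsilon> * s, x0 + \<sigma> * (\<epsilon> * s) + \<epsilon> * w))) \<in> borel_measurable lborel"
proof -
  have "(\<lambda>w. u (\<tau> + \<epsilon> * s, x0 + \<sigma> * (\<epsilon> * s) + \<epsilon> * w)) \<in> borel_measurable lborel"
    by (rule comp_meas[OF umeas]) (intro continuous_intros)
  then show ?thesis using GG_meas[OF fc, where S="\<lambda>w. s" and W="\<lambda>w. w"] by auto
qed

lemma inner_int_bound:
  fixes f :: "real \<Rightarrow> real" and u :: "real \<times> real \<Rightarrow> real"
  assumes fc: "continuous_on UNIV f" and umeas: "u \<in> borel_measurable lborel"
    and e: "0 < \<epsilon>" "\<epsilon> \<le> e0"
    and Kb: "\<And>t x. \<bar>t - \<tau>\<bar> < e0 * (2 + \<bar>\<sigma>\<bar>) \<Longrightarrow> \<bar>x - \<gamma> \<tau>\<bar> < e0 * (2 + \<bar>\<sigma>\<bar>) \<Longrightarrow> x \<noteq> \<gamma> t \<Longrightarrow> \<bar>u (t, x)\<bar> \<le> Kb"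
    and Fb: "\<And>v. \<bar>v\<bar> \<le> Kb \<Longrightarrow> \<bar>f v\<bar> \<le> Fb" and Kb0: "0 \<le> Kb" and Fb0: "0 \<le> Fb"
  shows "\<bar>\<integral>w. GG f c \<sigma> s w (u (\<tau> + \<epsilon> * s, \<gamma> \<tau> + \<sigma> * (\<epsilon> * s) + \<epsilon> * w)) \<partial>lborel\<bar>
      \<le> 2 * (4 * (Kb + \<bar>c\<bar>) + 4 * ((Fb + \<bar>f c\<bar>) + \<bar>\<sigma>\<bar> * (Kb + \<bar>c\<bar>))) * indicator {-1..1} s"
proof -
  let ?C = "4 * (Kb + \<bar>c\<bar>) + 4 * ((Fb + \<bar>f c\<bar>) + \<bar>\<sigma>\<bar> * (Kb + \<bar>c\<bar>))"
  let ?G = "\<lambda>w. GG f c \<sigma> s w (u (\<tau> + \<epsilon> * s, \<gamma> \<tau> + \<sigma> * (\<epsilon> * s) + \<epsilon> * w))"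
  have C0: "0 \<le> ?C" using Kb0 Fb0 by simp
  show ?thesis
  proof (cases "1 \<le> \<bar>s\<bar>")
    case True
    then have "?G = (\<lambda>w. 0)" using GG_zero by auto
    then show ?thesis using C0 by simp
  next
    case False
    then have "\<bar>s\<bar> < 1" by linarith
    then have ind: "indicator {-1..1} s = (1::real)" by (auto simp: abs_less_iff)
    have bd0: "AE w in lborel. \<bar>?G w\<bar> \<le> ?C * indicator {-1..1} w"
      by (rule inner_bound[where \<gamma>=\<gamma> and \<tau>=\<tau> and \<sigma>=\<sigma> and u=u and f=f and Kb=Kb and Fb=Fb and c=c and s=s]) (use e Kb Fb Kb0 Fb0 in auto)
    have bd: "AE w in lborel. norm (?G w) \<le> norm (?C * indicator {-1..1} w)"
      using bd0 by eventually_elim (simp add: C0)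
    have bd2: "AE w in lborel. norm (?G w) \<le> ?C * indicator {-1..1} w"
      using bd0 by eventually_elim simp
    have intG: "integrable lborel ?G"
      by (rule Bochner_Integration.integrable_bound[OF integrable_Cind Gu_meas[OF fc umeas] bd])
    have "norm (integral\<^sup>L lborel ?G) \<le> (\<integral>w. norm (?G w) \<partial>lborel)" by (rule integral_norm_bound)
    also have "\<dots> \<le> (\<integral>w. ?C * indicator {-1..1::real} w \<partial>lborel)"
      by (rule Bochner_Integration.integral_mono_AE[OF integrable_norm[OF intG] integrable_Cind bd2])
    also have "\<dots> = 2 * ?C" by (rule integral_Cind)
    finally show ?thesis using ind by simp
  qed
qed

lemma inner_limit:
  fixes f :: "real \<Rightarrow> real" and u :: "real \<times> real \<Rightarrow> real"
  assumes fc: "continuous_on UNIV f" and umeas: "u \<in> borel_measurable lborel"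
    and gd: "(\<gamma> has_real_derivative \<sigma>) (at \<tau>)"
    and L: "\<And>e. e > 0 \<Longrightarrow> \<exists>d>0. \<forall>t x. \<bar>t - \<tau>\<bar> < d \<longrightarrow> \<bar>x - \<gamma> \<tau>\<bar> < d \<longrightarrow> x < \<gamma> t \<longrightarrow> \<bar>u (t, x) - a\<bar> < e"
    and R: "\<And>e. e > 0 \<Longrightarrow> \<exists>d>0. \<forall>t x. \<bar>t - \<tau>\<bar> < d \<longrightarrow> \<bar>x - \<gamma> \<tau>\<bar> < d \<longrightarrow> \<gamma> t < x \<longrightarrow> \<bar>u (t, x) - b\<bar> < e"
    and e0: "0 < e0"
    and Kb: "\<And>t x. \<bar>t - \<tau>\<bar> < e0 * (2 + \<bar>\<sigma>\<bar>) \<Longrightarrow> \<bar>x - \<gamma> \<tau>\<bar> < e0 * (2 + \<bar>\<sigma>\<bar>) \<Longrightarrow> x \<noteq> \<gamma> t \<Longrightarrow> \<bar>u (t, x)\<bar> \<le> Kb"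
    and Fb: "\<And>v. \<bar>v\<bar> \<le> Kb \<Longrightarrow> \<bar>f v\<bar> \<le> Fb" and Kb0: "0 \<le> Kb" and Fb0: "0 \<le> Fb"
  shows "(\<lambda>n. \<integral>w. GG f c \<sigma> s w (u (\<tau> + e0 / real (Suc n) * s, \<gamma> \<tau> + \<sigma> * (e0 / real (Suc n) * s) + e0 / real (Suc n) * w)) \<partial>lborel)
     \<longlonglongrightarrow> (\<integral>w. GG f c \<sigma> s w (if w < 0 then a else b) \<partial>lborel)"
proof -
  let ?C = "4 * (Kb + \<bar>c\<bar>) + 4 * ((Fb + \<bar>f c\<bar>) + \<bar>\<sigma>\<bar> * (Kb + \<bar>c\<bar>))"
  define G where "G n w = GG f c \<sigma> s w (u (\<tau> + e0 / real (Suc n) * s, \<gamma> \<tau> + \<sigma> * (e0 / real (Suc n) * s) + e0 / real (Suc n) * w))" for n w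
  define G0 where "G0 w = GG f c \<sigma> s w (if w < 0 then a else b)" for w
  have C0: "0 \<le> ?C" using Kb0 Fb0 by simp
  have "(\<lambda>n. integral\<^sup>L lborel (G n)) \<longlonglongrightarrow> integral\<^sup>L lborel G0"
  proof (rule integral_dominated_convergence[where w="\<lambda>w. ?C * indicator {-1..1::real} w"])
    have "(\<lambda>w::real. if w < 0 then a else b) \<in> borel_measurable lborel" by measurable
    then show "G0 \<in> borel_measurable lborel"
      unfolding G0_def[abs_def] using GG_meas[OF fc, where S="\<lambda>w. s" and W="\<lambda>w. w"] by auto
    show "G n \<in> borel_measurable lborel" for n unfolding G_def[abs_def] by (rule Gu_meas[OF fc umeas])
    show "integrable lborel (\<lambda>w. ?C * indicator {-1..1::real} w)" by (rule integrable_Cind)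
    show "AE w in lborel. norm (G n w) \<le> ?C * indicator {-1..1} w" for n
    proof -
      have en: "0 < e0 / real (Suc n)" "e0 / real (Suc n) \<le> e0" using e0 by (auto simp: field_simps)
      have "AE w in lborel. \<bar>G n w\<bar> \<le> ?C * indicator {-1..1} w"
        unfolding G_def
        by (rule inner_bound[where \<gamma>=\<gamma> and \<tau>=\<tau> and \<sigma>=\<sigma> and u=u and f=f and Kb=Kb and Fb=Fb and c=c and s=s]) (use en Kb Fb Kb0 Fb0 in auto)
      then show ?thesis by simp
    qed
    show "AE w in lborel. (\<lambda>n. G n w) \<longlonglongrightarrow> G0 w"
      using AE_lborel_singleton[of 0]
    proof eventually_elim
      case (elim w)
      show ?case
      proof (cases "1 \<le> \<bar>s\<bar> \<or> 1 \<le> \<bar>w\<bar>")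
        case True
        then show ?thesis unfolding G_def G0_def using GG_zero[OF True] by simp
      next
        case False
        then have s: "\<bar>s\<bar> < 1" and w: "\<bar>w\<bar> < 1" by linarith+
        show ?thesis
        proof (cases "w < 0")
          case True
          from isCont_tendsto_compose[OF GG_cont[OF fc] point_tendsto_L[OF gd L e0 s w True]]
          show ?thesis unfolding G_def G0_def using True by simp
        next
          case False
          then have "w > 0" using elim by simp
          from isCont_tendsto_compose[OF GG_cont[OF fc] point_tendsto_R[OF gd R e0 s w this]]
          show ?thesis unfolding G_def G0_def using False by simp
        qed
      qed
    qed
  qed
  then show ?thesis unfolding G_def G0_def by simp
qed

lemma ifw_meas[measurable]: "(\<lambda>w::real. if w < 0 then A else (B::real)) \<in> borel_measurable lborel"
  by measurable

lemma limit_int_generic: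
  fixes A1 B1 A2 B2 :: real
  shows "(\<integral>w. dbump s * bump w * (if w < 0 then A1 else B1) + bump s * dbump w * (if w < 0 then A2 else B2) \<partial>lborel)
     = dbump s * (\<integral>w. bump w * (if w < 0 then A1 else B1) \<partial>lborel) + bump s * (A2 - B2)"
proof -
  have m1: "(\<lambda>w. bump w * (if w < 0 then A1 else B1)) \<in> borel_measurable lborel" by measurable
  have m2: "(\<lambda>w. dbump w * (if w < 0 then A2 else B2)) \<in> borel_measurable lborel" by measurable
  have i1: "integrable lborel (\<lambda>w. bump w * (if w < 0 then A1 else B1))"
  proof (rule integrable_supp[OF m1, where C="max \<bar>A1\<bar> \<bar>B1\<bar>" and a="-1" and b=1])
    fix x
    show "\<bar>bump x * (if x < 0 then A1 else B1)\<bar> \<le> max \<bar>A1\<bar> \<bar>B1\<bar> * indicator {-1..1} x"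
    proof (cases "\<bar>x\<bar> < 1")
      case True
      then have "indicator {-1..1} x = (1::real)" by (auto simp: abs_less_iff)
      moreover have "\<bar>bump x * (if x < 0 then A1 else B1)\<bar> \<le> 1 * max \<bar>A1\<bar> \<bar>B1\<bar>"
        unfolding abs_mult by (intro mult_mono) (auto simp: bump_le1 bump_nonneg)
      ultimately show ?thesis by simp
    next
      case False
      then show ?thesis using bump_out[of x] by simp
    qed
  qed
  have i2: "integrable lborel (\<lambda>w. dbump w * (if w < 0 then A2 else B2))"
  proof (rule integrable_supp[OF m2, where C="4 * max \<bar>A2\<bar> \<bar>B2\<bar>" and a="-1" and b=1])
    fix x
    show "\<bar>dbump x * (if x < 0 then A2 else B2)\<bar> \<le> 4 * max \<bar>A2\<bar> \<bar>B2\<bar> * indicator {-1..1} x"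
    proof (cases "\<bar>x\<bar> < 1")
      case True
      then have "indicator {-1..1} x = (1::real)" by (auto simp: abs_less_iff)
      moreover have "\<bar>dbump x * (if x < 0 then A2 else B2)\<bar> \<le> 4 * max \<bar>A2\<bar> \<bar>B2\<bar>"
        unfolding abs_mult by (intro mult_mono) (auto simp: dbump_bound)
      ultimately show ?thesis by simp
    next
      case False
      then show ?thesis using bump_out[of x] by simp
    qed
  qed
  have iL: "integrable lborel (\<lambda>w. indicator {-1..0} w * dbump w :: real)"
    by (rule integrable_supp[where C=4 and a="-1" and b=0]) (auto simp: indicator_def dbump_bound)
  have iR: "integrable lborel (\<lambda>w. indicator {0..1} w * dbump w :: real)"
    by (rule integrable_supp[where C=4 and a=0 and b=1]) (auto simp: indicator_def dbump_bound)
  have ae: "AE w in lborel. dbump w * (if w < 0 then A2 else B2) = A2 * (indicator {-1..0} w * dbump w) + B2 * (indicator {0..1} w * dbump w)"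
    using AE_lborel_singleton[of 0]
  proof eventually_elim
    case (elim w)
    show ?case
    proof (cases "w < 0")
      case True
      show ?thesis
      proof (cases "-1 \<le> w")
        case True
        then show ?thesis using \<open>w < 0\<close> by (simp add: indicator_def)
      next
        case False
        then show ?thesis using \<open>w < 0\<close> bump_out[of w] by (simp add: indicator_def)
      qed
    next
      case False
      then have w: "w > 0" using elim by simp
      show ?thesis
      proof (cases "w \<le> 1")
        case True
        then show ?thesis using w by (simp add: indicator_def)
      next
        case False
        then show ?thesis using w bump_out[of w] by (simp add: indicator_def)
      qed
    qed
  qed
  have "(\<integral>w. dbump w * (if w < 0 then A2 else B2) \<partial>lborel)
      = (\<integral>w. A2 * (indicator {-1..0} w * dbump w) + B2 * (indicator {0..1} w * dbump w) \<partial>lborel)"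
    by (rule integral_cong_AE[OF m2 _ ae]) measurable
  also have "\<dots> = A2 * 1 + B2 * (-1)"
    using iL iR int_dbumpL int_dbumpR by simp
  finally have I2: "(\<integral>w. dbump w * (if w < 0 then A2 else B2) \<partial>lborel) = A2 - B2" by simp
  have "(\<integral>w. dbump s * bump w * (if w < 0 then A1 else B1) + bump s * dbump w * (if w < 0 then A2 else B2) \<partial>lborel)
      = (\<integral>w. dbump s * (bump w * (if w < 0 then A1 else B1)) + bump s * (dbump w * (if w < 0 then A2 else B2)) \<partial>lborel)"
    by (simp add: mult.assoc)
  also have "\<dots> = dbump s * (\<integral>w. bump w * (if w < 0 then A1 else B1) \<partial>lborel) + bump s * (A2 - B2)"
    using i1 i2 I2 by simp
  finally show ?thesis .
qed

lemma GG_if: "GG f c \<sigma> s w (if w < 0 then a else b) =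
   dbump s * bump w * (if w < 0 then \<bar>a - c\<bar> else \<bar>b - c\<bar>) +
   bump s * dbump w * (if w < 0 then sgn (a - c) * (f a - f c) - \<sigma> * \<bar>a - c\<bar> else sgn (b - c) * (f b - f c) - \<sigma> * \<bar>b - c\<bar>)"
  by (simp add: GG_def)

lemma G0_integral:
  "(\<integral>w. GG f c \<sigma> s w (if w < 0 then a else b) \<partial>lborel) =
    dbump s * (\<integral>w. bump w * (if w < 0 then \<bar>a - c\<bar> else \<bar>b - c\<bar>) \<partial>lborel) +
    bump s * ((sgn (a - c) * (f a - f c) - \<sigma> * \<bar>a - c\<bar>) - (sgn (b - c) * (f b - f c) - \<sigma> * \<bar>b - c\<bar>))"
  unfolding GG_if by (rule limit_int_generic)

lemma G_pair_meas:
  fixes f :: "real \<Rightarrow> real" and u :: "real \<times> real \<Rightarrow> real"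
  assumes fc: "continuous_on UNIV f" and umeas: "u \<in> borel_measurable lborel"
  shows "(\<lambda>(s, w). GG f c \<sigma> s w (u (\<tau> + \<epsilon> * s, x0 + \<sigma> * (\<epsilon> * s) + \<epsilon> * w))) \<in> borel_measurable (lborel \<Otimes>\<^sub>M lborel)"
proof -
  have "(\<lambda>p::real\<times>real. u (\<tau> + \<epsilon> * fst p, x0 + \<sigma> * (\<epsilon> * fst p) + \<epsilon> * snd p)) \<in> borel_measurable lborel"
    by (rule comp_meas[OF umeas]) (intro continuous_intros)
  moreover have cf: "continuous_on UNIV (\<lambda>p::real\<times>real. fst p)" "continuous_on UNIV (\<lambda>p::real\<times>real. snd p)"
    by (intro continuous_intros)+
  ultimately have "(\<lambda>p::real\<times>real. GG f c \<sigma> (fst p) (snd p) (u (\<tau> + \<epsilon> * fst p, x0 + \<sigma> * (\<epsilon> * fst p) + \<epsilon> * snd p))) \<in> borel_measurable lborel"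
    by (rule GG_meas[OF fc])
  then show ?thesis by (simp add: lborel_prod case_prod_beta')
qed

lemma outer_limit:
  fixes f :: "real \<Rightarrow> real" and u :: "real \<times> real \<Rightarrow> real"
  assumes fc: "continuous_on UNIV f" and umeas: "u \<in> borel_measurable lborel"
    and gd: "(\<gamma> has_real_derivative \<sigma>) (at \<tau>)"
    and L: "\<And>e. e > 0 \<Longrightarrow> \<exists>d>0. \<forall>t x. \<bar>t - \<tau>\<bar> < d \<longrightarrow> \<bar>x - \<gamma> \<tau>\<bar> < d \<longrightarrow> x < \<gamma> t \<longrightarrow> \<bar>u (t, x) - a\<bar> < e"
    and R: "\<And>e. e > 0 \<Longrightarrow> \<exists>d>0. \<forall>t x. \<bar>t - \<tau>\<bar> < d \<longrightarrow> \<bar>x - \<gamma> \<tau>\<bar> < d \<longrightarrow> \<gamma> t < x \<longrightarrow> \<bar>u (t, x) - b\<bar> < e"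
    and e0: "0 < e0"
    and Kb: "\<And>t x. \<bar>t - \<tau>\<bar> < e0 * (2 + \<bar>\<sigma>\<bar>) \<Longrightarrow> \<bar>x - \<gamma> \<tau>\<bar> < e0 * (2 + \<bar>\<sigma>\<bar>) \<Longrightarrow> x \<noteq> \<gamma> t \<Longrightarrow> \<bar>u (t, x)\<bar> \<le> Kb"
    and Fb: "\<And>v. \<bar>v\<bar> \<le> Kb \<Longrightarrow> \<bar>f v\<bar> \<le> Fb" and Kb0: "0 \<le> Kb" and Fb0: "0 \<le> Fb"
  shows "(\<lambda>n. \<integral>s. (\<integral>w. GG f c \<sigma> s w (u (\<tau> + e0 / real (Suc n) * s, \<gamma> \<tau> + \<sigma> * (e0 / real (Suc n) * s) + e0 / real (Suc n) * w)) \<partial>lborel) \<partial>lborel)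
     \<longlonglongrightarrow> 16/15 * ((sgn (a - c) * (f a - f c) - \<sigma> * \<bar>a - c\<bar>) - (sgn (b - c) * (f b - f c) - \<sigma> * \<bar>b - c\<bar>))"
proof -
  let ?C = "4 * (Kb + \<bar>c\<bar>) + 4 * ((Fb + \<bar>f c\<bar>) + \<bar>\<sigma>\<bar> * (Kb + \<bar>c\<bar>))"
  let ?D = "(sgn (a - c) * (f a - f c) - \<sigma> * \<bar>a - c\<bar>) - (sgn (b - c) * (f b - f c) - \<sigma> * \<bar>b - c\<bar>)"
  define C1 where "C1 = (\<integral>w. bump w * (if w < 0 then \<bar>a - c\<bar> else \<bar>b - c\<bar>) \<partial>lborel)"
  define V where "V n s = (\<integral>w. GG f c \<sigma> s w (u (\<tau> + e0 / real (Suc n) * s, \<gamma> \<tau> + \<sigma> * (e0 / real (Suc n) * s) + e0 / real (Suc n) * w)) \<partial>lborel)" for n s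
  define H where "H s = dbump s * C1 + bump s * ?D" for s
  have "(\<lambda>n. integral\<^sup>L lborel (V n)) \<longlonglongrightarrow> integral\<^sup>L lborel H"
  proof (rule integral_dominated_convergence[where w="\<lambda>s. 2 * ?C * indicator {-1..1::real} s"])
    show "H \<in> borel_measurable lborel" unfolding H_def[abs_def] by measurable
    show "V n \<in> borel_measurable lborel" for n
      unfolding V_def[abs_def]
      by (rule lborel.borel_measurable_lebesgue_integral[OF G_pair_meas[OF fc umeas]])
    show "integrable lborel (\<lambda>s. 2 * ?C * indicator {-1..1::real} s)" by (rule integrable_Cind)
    show "AE s in lborel. norm (V n s) \<le> 2 * ?C * indicator {-1..1::real} s" for n
    proof (rule always_eventually, rule allI)
      fix s
      have en: "0 < e0 / real (Suc n)" "e0 / real (Suc n) \<le> e0" using e0 by (auto simp: field_simps)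
      have "\<bar>V n s\<bar> \<le> 2 * ?C * indicator {-1..1} s"
        unfolding V_def
        by (rule inner_int_bound[where \<gamma>=\<gamma> and \<tau>=\<tau> and \<sigma>=\<sigma> and u=u and f=f and Kb=Kb and Fb=Fb and c=c and s=s])
          (use fc umeas en Kb Fb Kb0 Fb0 in auto)
      then show "norm (V n s) \<le> 2 * ?C * indicator {-1..1::real} s" by simp
    qed
    show "AE s in lborel. (\<lambda>n. V n s) \<longlonglongrightarrow> H s"
    proof (rule always_eventually, rule allI)
      fix s
      have "(\<lambda>n. V n s) \<longlonglongrightarrow> (\<integral>w. GG f c \<sigma> s w (if w < 0 then a else b) \<partial>lborel)"
        unfolding V_def by (rule inner_limit[OF fc umeas gd L R e0 Kb Fb Kb0 Fb0])
      then show "(\<lambda>n. V n s) \<longlonglongrightarrow> H s" unfolding H_def C1_def G0_integral .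
    qed
  qed
  moreover have "integral\<^sup>L lborel H = 16/15 * ?D"
  proof -
    have "integral\<^sup>L lborel H = C1 * (\<integral>s. dbump s \<partial>lborel) + ?D * (\<integral>s. bump s \<partial>lborel)"
      unfolding H_def using integrable_bump integrable_dbump by (simp add: mult.commute)
    then show ?thesis by (simp add: int_bump int_dbump)
  qed
  ultimately show ?thesis unfolding V_def by simp
qed

lemma jump_ineq:
  fixes f :: "real \<Rightarrow> real" and u :: "real \<times> real \<Rightarrow> real" and \<gamma> :: "real \<Rightarrow> real"
  assumes sol: "kruzkov_solution f u0 u" and fc: "continuous_on UNIV f" and tau: "0 < \<tau>"
    and gd: "(\<gamma> has_real_derivative \<sigma>) (at \<tau>)"
    and L: "\<And>e. e > 0 \<Longrightarrow> \<exists>d>0. \<forall>t x. \<bar>t - \<tau>\<bar> < d \<longrightarrow> \<bar>x - \<gamma> \<tau>\<bar> < d \<longrightarrow> x < \<gamma> t \<longrightarrow> \<bar>u (t, x) - a\<bar> < e"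
    and R: "\<And>e. e > 0 \<Longrightarrow> \<exists>d>0. \<forall>t x. \<bar>t - \<tau>\<bar> < d \<longrightarrow> \<bar>x - \<gamma> \<tau>\<bar> < d \<longrightarrow> \<gamma> t < x \<longrightarrow> \<bar>u (t, x) - b\<bar> < e"
  shows "sgn (b - c) * (f b - f c) - sgn (a - c) * (f a - f c) \<le> \<sigma> * (\<bar>b - c\<bar> - \<bar>a - c\<bar>)"
proof -
  have umeas: "u \<in> borel_measurable lborel" using sol unfolding kruzkov_solution_def by blast
  obtain d1 where d1: "d1 > 0" "\<And>t x. \<bar>t - \<tau>\<bar> < d1 \<Longrightarrow> \<bar>x - \<gamma> \<tau>\<bar> < d1 \<Longrightarrow> x < \<gamma> t \<Longrightarrow> \<bar>u (t, x) - a\<bar> < 1"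
    using L[of 1] by auto
  obtain d2 where d2: "d2 > 0" "\<And>t x. \<bar>t - \<tau>\<bar> < d2 \<Longrightarrow> \<bar>x - \<gamma> \<tau>\<bar> < d2 \<Longrightarrow> \<gamma> t < x \<Longrightarrow> \<bar>u (t, x) - b\<bar> < 1"
    using R[of 1] by auto
  define Kb where "Kb = max \<bar>a\<bar> \<bar>b\<bar> + 1"
  have Kb0: "0 \<le> Kb" unfolding Kb_def by simp
  obtain Fb where Fb: "\<And>v. \<bar>v\<bar> \<le> Kb \<Longrightarrow> \<bar>f v\<bar> \<le> Fb" "0 \<le> Fb"
    using f_bounded_on[OF fc, of Kb] by blast
  define e0 where "e0 = min (\<tau> / 2) (min d1 d2 / (2 + \<bar>\<sigma>\<bar>))"
  have e0p: "0 < e0" unfolding e0_def using tau d1 d2 by (simp add: add_pos_nonneg)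
  have e0t: "e0 < \<tau>" unfolding e0_def using tau by simp
  have "e0 \<le> min d1 d2 / (2 + \<bar>\<sigma>\<bar>)" unfolding e0_def by simp
  then have e0d: "e0 * (2 + \<bar>\<sigma>\<bar>) \<le> min d1 d2" by (simp add: pos_le_divide_eq add_pos_nonneg)
  have Kb: "\<bar>u (t, x)\<bar> \<le> Kb" if "\<bar>t - \<tau>\<bar> < e0 * (2 + \<bar>\<sigma>\<bar>)" "\<bar>x - \<gamma> \<tau>\<bar> < e0 * (2 + \<bar>\<sigma>\<bar>)" "x \<noteq> \<gamma> t" for t x
  proof (cases "x < \<gamma> t")
    case True
    have "\<bar>u (t, x) - a\<bar> < 1" by (rule d1(2)) (use that e0d True in auto)
    then show ?thesis unfolding Kb_def by linarith
  next
    case False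
    then have "\<gamma> t < x" using that(3) by simp
    have "\<bar>u (t, x) - b\<bar> < 1" by (rule d2(2)) (use that e0d \<open>\<gamma> t < x\<close> in auto)
    then show ?thesis unfolding Kb_def by linarith
  qed
  let ?D = "(sgn (a - c) * (f a - f c) - \<sigma> * \<bar>a - c\<bar>) - (sgn (b - c) * (f b - f c) - \<sigma> * \<bar>b - c\<bar>)"
  have lim: "(\<lambda>n. \<integral>s. (\<integral>w. GG f c \<sigma> s w (u (\<tau> + e0 / real (Suc n) * s, \<gamma> \<tau> + \<sigma> * (e0 / real (Suc n) * s) + e0 / real (Suc n) * w)) \<partial>lborel) \<partial>lborel)
     \<longlonglongrightarrow> 16/15 * ?D"
    by (rule outer_limit[OF fc umeas gd L R e0p Kb Fb(1) Kb0 Fb(2)])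
  have "0 \<le> (\<integral>s. (\<integral>w. GG f c \<sigma> s w (u (\<tau> + e0 / real (Suc n) * s, \<gamma> \<tau> + \<sigma> * (e0 / real (Suc n) * s) + e0 / real (Suc n) * w)) \<partial>lborel) \<partial>lborel)" for n
  proof (rule kruz_scaled[OF sol fc])
    show "0 < e0 / real (Suc n)" using e0p by simp
    have "e0 / real (Suc n) \<le> e0" using e0p by (simp add: field_simps)
    then show "e0 / real (Suc n) < \<tau>" using e0t by linarith
  qed
  then have "0 \<le> 16/15 * ?D" by (intro LIMSEQ_le_const[OF lim]) auto
  then have "0 \<le> ?D" by simp
  then show ?thesis by (simp add: algebra_simps)
qed

lemma strict_mid_concave:
  fixes f f' f'' :: "real \<Rightarrow> real"
  assumes f_deriv: "\<And>y. (f has_real_derivative f' y) (at y)"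
    and f'_deriv: "\<And>y. (f' has_real_derivative f'' y) (at y)"
    and f''_neg: "\<And>y. f'' y < 0"
    and ba: "b < a"
  shows "f a + f b < 2 * f ((a + b) / 2)"
proof -
  define m where "m = (a + b) / 2"
  have bm: "b < m" and ma: "m < a" using ba by (auto simp: m_def)
  obtain z1 where z1: "b < z1" "z1 < m" "f m - f b = (m - b) * f' z1"
    using MVT2[OF bm, of f f'] f_deriv by blast
  obtain z2 where z2: "m < z2" "z2 < a" "f a - f m = (a - m) * f' z2"
    using MVT2[OF ma, of f f'] f_deriv by blast
  have "z1 < z2" using z1 z2 by simp
  then have "f' z1 > f' z2"
    by (rule DERIV_neg_imp_decreasing) (use f'_deriv f''_neg in blast)
  moreover have h: "m - b = (a - b) / 2" "a - m = (a - b) / 2" by (simp_all add: m_def field_simps)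
  moreover have pos: "(a - b) / 2 > 0" using ba by simp
  ultimately have "(a - b) / 2 * f' z2 < (a - b) / 2 * f' z1" by (intro mult_strict_left_mono) auto
  then have "(a - m) * f' z2 < (m - b) * f' z1" unfolding h .
  then show ?thesis using z1(3) z2(3) by (simp add: m_def[symmetric])
qed

lemma side_limit:
  fixes u :: "real \<times> real \<Rightarrow> real"
  assumes H: "\<And>e. e > 0 \<Longrightarrow> \<exists>d>0. \<forall>t x. \<bar>t - \<tau>\<bar> < d \<longrightarrow> \<bar>x - x0\<bar> < d \<longrightarrow> P t x \<longrightarrow> \<bar>u (t, x) - a\<bar> < e"
    and ev: "eventually (\<lambda>t. P t x0) (at \<tau> within S)"
  shows "((\<lambda>t. u (t, x0)) \<longlongrightarrow> a) (at \<tau> within S)"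
proof (rule tendstoI)
  fix e :: real assume "e > 0"
  from H[OF this] obtain d where d: "d > 0" "\<forall>t x. \<bar>t - \<tau>\<bar> < d \<longrightarrow> \<bar>x - x0\<bar> < d \<longrightarrow> P t x \<longrightarrow> \<bar>u (t, x) - a\<bar> < e" by blast
  have "eventually (\<lambda>t. dist t \<tau> < d) (at \<tau> within S)"
    using tendstoD[OF tendsto_ident_at d(1)] .
  then show "eventually (\<lambda>t. dist (u (t, x0)) a < e) (at \<tau> within S)"
    using ev
  proof eventually_elim
    case (elim t)
    then show ?case using d(1) d(2)[rule_format, of t x0] by (simp add: dist_real_def)
  qed
qed

theorem lemma3p1:
  fixes f f' f'' :: "real \<Rightarrow> real"
    and u0 :: "real \<Rightarrow> real"
    and u uL uR :: "real \<times> real \<Rightarrow> real"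
    and \<gamma> \<gamma>' :: "real \<Rightarrow> real"
    and t1 t2 \<tau> :: real
    and U :: "(real \<times> real) set"
  assumes f_deriv: "\<And>y. (f has_real_derivative f' y) (at y)"
    and f'_deriv: "\<And>y. (f' has_real_derivative f'' y) (at y)"
    and f''_cont: "continuous_on UNIV f''"
    and f''_neg: "\<And>y. f'' y < 0"
    and u0_BV: "BV u0"
    and sol: "kruzkov_solution f u0 u"
    and t1_nonneg: "0 \<le> t1"
    and \<gamma>_deriv: "\<And>t. t1 < t \<Longrightarrow> t < t2 \<Longrightarrow> (\<gamma> has_real_derivative \<gamma>' t) (at t)"
    and \<gamma>'_cont: "continuous_on {t1<..<t2} \<gamma>'"
    and disc: "discontinuous_across u t1 t2 \<gamma>"
    and \<tau>: "t1 < \<tau>" "\<tau> < t2"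
    and U: "open U" "(\<tau>, \<gamma> \<tau>) \<in> U"
    and uL: "continuous_on (left_side U t1 t2 \<gamma>) uL"
      "\<And>t x. (t, x) \<in> U \<Longrightarrow> t1 < t \<Longrightarrow> t < t2 \<Longrightarrow> x < \<gamma> t \<Longrightarrow> uL (t, x) = u (t, x)"
    and uR: "continuous_on (right_side U t1 t2 \<gamma>) uR"
      "\<And>t x. (t, x) \<in> U \<Longrightarrow> t1 < t \<Longrightarrow> t < t2 \<Longrightarrow> \<gamma> t < x \<Longrightarrow> uR (t, x) = u (t, x)"
  shows "(\<gamma>' \<tau> \<noteq> 0 \<longrightarrow>
            (\<exists>a b. ((\<lambda>t. f (u (t, \<gamma> \<tau>))) \<longlongrightarrow> a) (at_right \<tau>) \<and>
                   ((\<lambda>t. f (u (t, \<gamma> \<tau>))) \<longlongrightarrow> b) (at_left \<tau>) \<and> a \<le> b))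
       \<and> (\<gamma>' \<tau> = 0 \<longrightarrow> f (uL (\<tau>, \<gamma> \<tau>)) = f (uR (\<tau>, \<gamma> \<tau>)))"
proof -
  have fC: "isCont f y" for y using f_deriv[of y] by (rule DERIV_isCont)
  have fc: "continuous_on UNIV f" using fC by (simp add: continuous_on_eq_continuous_at)
  have tau0: "0 < \<tau>" using t1_nonneg \<tau> by linarith
  define \<sigma> where "\<sigma> = \<gamma>' \<tau>"
  have gd: "(\<gamma> has_real_derivative \<sigma>) (at \<tau>)" using \<gamma>_deriv \<tau> by (simp add: \<sigma>_def)
  define x0 where "x0 = \<gamma> \<tau>"
  define a where "a = uL (\<tau>, x0)"
  define b where "b = uR (\<tau>, x0)"
  obtain r where r: "r > 0" "ball (\<tau>, x0) r \<subseteq> U" using U unfolding x0_def by (rule openE)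
  define \<rho> where "\<rho> = min (r / 2) (min (\<tau> - t1) (t2 - \<tau>))"
  have \<rho>: "\<rho> > 0" unfolding \<rho>_def using r \<tau> by simp
  have distle: "dist (t, x) (\<tau>, x0) \<le> \<bar>t - \<tau>\<bar> + \<bar>x - x0\<bar>" for t x
    by (simp add: dist_Pair_Pair dist_real_def sqrt_sum_squares_le_sum_abs)
  have inU: "(t, x) \<in> U \<and> t1 < t \<and> t < t2" if "\<bar>t - \<tau>\<bar> < \<rho>" "\<bar>x - x0\<bar> < \<rho>" for t x
  proof -
    have "dist (t, x) (\<tau>, x0) < r" using distle[of t x] that unfolding \<rho>_def by linarith
    then have "(t, x) \<in> U" using r(2) by (auto simp: dist_commute)
    moreover have "t1 < t \<and> t < t2" using that unfolding \<rho>_def by (auto simp: abs_less_iff)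
    ultimately show ?thesis by blast
  qed
  have PL: "(\<tau>, x0) \<in> left_side U t1 t2 \<gamma>" using U \<tau> unfolding left_side_def x0_def by auto
  have PR: "(\<tau>, x0) \<in> right_side U t1 t2 \<gamma>" using U \<tau> unfolding right_side_def x0_def by auto
  have L: "\<exists>d>0. \<forall>t x. \<bar>t - \<tau>\<bar> < d \<longrightarrow> \<bar>x - \<gamma> \<tau>\<bar> < d \<longrightarrow> x < \<gamma> t \<longrightarrow> \<bar>u (t, x) - a\<bar> < e" if e: "e > 0" for e
  proof -
    obtain d' where d': "d' > 0" "\<And>p. p \<in> left_side U t1 t2 \<gamma> \<Longrightarrow> dist p (\<tau>, x0) < d' \<Longrightarrow> dist (uL p) (uL (\<tau>, x0)) < e"
      using uL(1) PL e unfolding continuous_on_iff by metis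
    have "\<forall>t x. \<bar>t - \<tau>\<bar> < min \<rho> (d' / 2) \<longrightarrow> \<bar>x - \<gamma> \<tau>\<bar> < min \<rho> (d' / 2) \<longrightarrow> x < \<gamma> t \<longrightarrow> \<bar>u (t, x) - a\<bar> < e"
    proof (intro allI impI)
      fix t x assume h: "\<bar>t - \<tau>\<bar> < min \<rho> (d' / 2)" "\<bar>x - \<gamma> \<tau>\<bar> < min \<rho> (d' / 2)" "x < \<gamma> t"
      then have h2: "\<bar>x - x0\<bar> < min \<rho> (d' / 2)" by (simp add: x0_def)
      have i: "(t, x) \<in> U \<and> t1 < t \<and> t < t2" using inU h(1) h2 by auto
      then have eq: "u (t, x) = uL (t, x)" using uL(2) h(3) by auto
      have inl: "(t, x) \<in> left_side U t1 t2 \<gamma>" using i h(3) unfolding left_side_def by auto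
      have "dist (t, x) (\<tau>, x0) < d'" using distle[of t x] h(1) h2 by linarith
      then have "dist (uL (t, x)) (uL (\<tau>, x0)) < e" by (rule d'(2)[OF inl])
      then show "\<bar>u (t, x) - a\<bar> < e" using eq by (simp add: a_def dist_real_def)
    qed
    moreover have "min \<rho> (d' / 2) > 0" using \<rho> d' by simp
    ultimately show ?thesis by blast
  qed
  have R: "\<exists>d>0. \<forall>t x. \<bar>t - \<tau>\<bar> < d \<longrightarrow> \<bar>x - \<gamma> \<tau>\<bar> < d \<longrightarrow> \<gamma> t < x \<longrightarrow> \<bar>u (t, x) - b\<bar> < e" if e: "e > 0" for e
  proof -
    obtain d' where d': "d' > 0" "\<And>p. p \<in> right_side U t1 t2 \<gamma> \<Longrightarrow> dist p (\<tau>, x0) < d' \<Longrightarrow> dist (uR p) (uR (\<tau>, x0)) < e"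
      using uR(1) PR e unfolding continuous_on_iff by metis
    have "\<forall>t x. \<bar>t - \<tau>\<bar> < min \<rho> (d' / 2) \<longrightarrow> \<bar>x - \<gamma> \<tau>\<bar> < min \<rho> (d' / 2) \<longrightarrow> \<gamma> t < x \<longrightarrow> \<bar>u (t, x) - b\<bar> < e"
    proof (intro allI impI)
      fix t x assume h: "\<bar>t - \<tau>\<bar> < min \<rho> (d' / 2)" "\<bar>x - \<gamma> \<tau>\<bar> < min \<rho> (d' / 2)" "\<gamma> t < x"
      then have h2: "\<bar>x - x0\<bar> < min \<rho> (d' / 2)" by (simp add: x0_def)
      have i: "(t, x) \<in> U \<and> t1 < t \<and> t < t2" using inU h(1) h2 by auto
      then have eq: "u (t, x) = uR (t, x)" using uR(2) h(3) by auto
      have inr: "(t, x) \<in> right_side U t1 t2 \<gamma>" using i h(3) unfolding right_side_def by auto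
      have "dist (t, x) (\<tau>, x0) < d'" using distle[of t x] h(1) h2 by linarith
      then have "dist (uR (t, x)) (uR (\<tau>, x0)) < e" by (rule d'(2)[OF inr])
      then show "\<bar>u (t, x) - b\<bar> < e" using eq by (simp add: b_def dist_real_def)
    qed
    moreover have "min \<rho> (d' / 2) > 0" using \<rho> d' by simp
    ultimately show ?thesis by blast
  qed
  have J: "sgn (b - c) * (f b - f c) - sgn (a - c) * (f a - f c) \<le> \<sigma> * (\<bar>b - c\<bar> - \<bar>a - c\<bar>)" for c
    by (rule jump_ineq[OF sol fc tau0 gd L R])
  define c1 where "c1 = max \<bar>a\<bar> \<bar>b\<bar> + 1"
  have c1: "a < c1" "b < c1" "- c1 < a" "- c1 < b" unfolding c1_def by auto
  have J1: "f a - f b \<le> \<sigma> * (a - b)"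
  proof -
    have "sgn (b - c1) = -1" "sgn (a - c1) = -1" "\<bar>b - c1\<bar> = c1 - b" "\<bar>a - c1\<bar> = c1 - a"
      using c1 by (auto simp: sgn_if)
    then show ?thesis using J[of c1] by (simp add: algebra_simps)
  qed
  have J2: "f b - f a \<le> \<sigma> * (b - a)"
  proof -
    have "sgn (b - (- c1)) = 1" "sgn (a - (- c1)) = 1" "\<bar>b - (- c1)\<bar> = b + c1" "\<bar>a - (- c1)\<bar> = a + c1"
      using c1 by (auto simp: sgn_if)
    then show ?thesis using J[of "- c1"] by (simp add: algebra_simps)
  qed
  have RH: "f b - f a = \<sigma> * (b - a)" using J1 J2 by (simp add: algebra_simps)
  have ab: "a \<le> b"
  proof (rule ccontr)
    assume "\<not> a \<le> b"
    then have ba: "b < a" by simp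
    define c where "c = (a + b) / 2"
    have e1: "b - c = - ((a - b) / 2)" "a - c = (a - b) / 2" by (simp_all add: c_def field_simps)
    have pos: "(a - b) / 2 > 0" using ba by simp
    have "sgn (b - c) = -1" "sgn (a - c) = 1" "\<bar>b - c\<bar> = \<bar>a - c\<bar>"
      unfolding e1 using pos by (auto simp: sgn_if)
    then have "2 * f c - f a - f b \<le> 0" using J[of c] by (simp add: algebra_simps)
    moreover have "f a + f b < 2 * f c" unfolding c_def by (rule strict_mid_concave[OF f_deriv f'_deriv f''_neg ba])
    ultimately show False by linarith
  qed
  have part2: "\<gamma>' \<tau> = 0 \<longrightarrow> f (uL (\<tau>, \<gamma> \<tau>)) = f (uR (\<tau>, \<gamma> \<tau>))"
    using RH unfolding \<sigma>_def a_def b_def x0_def by auto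
  have part1: "\<exists>a b. ((\<lambda>t. f (u (t, \<gamma> \<tau>))) \<longlongrightarrow> a) (at_right \<tau>) \<and>
                   ((\<lambda>t. f (u (t, \<gamma> \<tau>))) \<longlongrightarrow> b) (at_left \<tau>) \<and> a \<le> b" if ne: "\<gamma>' \<tau> \<noteq> 0"
  proof (cases "\<sigma> > 0")
    case True
    obtain d1 where d1: "d1 > 0" "\<forall>h>0. h < d1 \<longrightarrow> \<gamma> \<tau> < \<gamma> (\<tau> + h)" using DERIV_pos_inc_right[OF gd True] by blast
    obtain d2 where d2: "d2 > 0" "\<forall>h>0. h < d2 \<longrightarrow> \<gamma> (\<tau> - h) < \<gamma> \<tau>" using DERIV_pos_inc_left[OF gd True] by blast
    have evr: "eventually (\<lambda>t. \<gamma> \<tau> < \<gamma> t) (at_right \<tau>)"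
      unfolding eventually_at_right_field
    proof (intro exI[of _ "\<tau> + d1"] conjI allI impI)
      show "\<tau> < \<tau> + d1" using d1 by simp
      fix y assume "\<tau> < y" "y < \<tau> + d1"
      then show "\<gamma> \<tau> < \<gamma> y" using d1(2)[rule_format, of "y - \<tau>"] by simp
    qed
    have evl: "eventually (\<lambda>t. \<gamma> t < \<gamma> \<tau>) (at_left \<tau>)"
      unfolding eventually_at_left_field
    proof (intro exI[of _ "\<tau> - d2"] conjI allI impI)
      show "\<tau> - d2 < \<tau>" using d2 by simp
      fix y assume "\<tau> - d2 < y" "y < \<tau>"
      then show "\<gamma> y < \<gamma> \<tau>" using d2(2)[rule_format, of "\<tau> - y"] by simp
    qed
    have lr: "((\<lambda>t. u (t, \<gamma> \<tau>)) \<longlongrightarrow> a) (at_right \<tau>)"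
      by (rule side_limit[where P="\<lambda>t x. x < \<gamma> t", OF L evr])
    have ll: "((\<lambda>t. u (t, \<gamma> \<tau>)) \<longlongrightarrow> b) (at_left \<tau>)"
      by (rule side_limit[where P="\<lambda>t x. \<gamma> t < x", OF R evl])
    have "f a \<le> f b" using RH ab True by (smt (verit) mult_nonneg_nonneg)
    then show ?thesis using isCont_tendsto_compose[OF fC lr] isCont_tendsto_compose[OF fC ll] by blast
  next
    case False
    then have neg: "\<sigma> < 0" using ne unfolding \<sigma>_def by simp
    obtain d1 where d1: "d1 > 0" "\<forall>h>0. h < d1 \<longrightarrow> \<gamma> (\<tau> + h) < \<gamma> \<tau>" using DERIV_neg_dec_right[OF gd neg] by blast
    obtain d2 where d2: "d2 > 0" "\<forall>h>0. h < d2 \<longrightarrow> \<gamma> \<tau> < \<gamma> (\<tau> - h)" using DERIV_neg_dec_left[OF gd neg] by blast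
    have evr: "eventually (\<lambda>t. \<gamma> t < \<gamma> \<tau>) (at_right \<tau>)"
      unfolding eventually_at_right_field
    proof (intro exI[of _ "\<tau> + d1"] conjI allI impI)
      show "\<tau> < \<tau> + d1" using d1 by simp
      fix y assume "\<tau> < y" "y < \<tau> + d1"
      then show "\<gamma> y < \<gamma> \<tau>" using d1(2)[rule_format, of "y - \<tau>"] by simp
    qed
    have evl: "eventually (\<lambda>t. \<gamma> \<tau> < \<gamma> t) (at_left \<tau>)"
      unfolding eventually_at_left_field
    proof (intro exI[of _ "\<tau> - d2"] conjI allI impI)
      show "\<tau> - d2 < \<tau>" using d2 by simp
      fix y assume "\<tau> - d2 < y" "y < \<tau>"
      then show "\<gamma> \<tau> < \<gamma> y" using d2(2)[rule_format, of "\<tau> - y"] by simp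
    qed
    have lr: "((\<lambda>t. u (t, \<gamma> \<tau>)) \<longlongrightarrow> b) (at_right \<tau>)"
      by (rule side_limit[where P="\<lambda>t x. \<gamma> t < x", OF R evr])
    have ll: "((\<lambda>t. u (t, \<gamma> \<tau>)) \<longlongrightarrow> a) (at_left \<tau>)"
      by (rule side_limit[where P="\<lambda>t x. x < \<gamma> t", OF L evl])
    have "\<sigma> * (b - a) \<le> 0" using neg ab by (simp add: mult_nonpos_nonneg)
    then have "f b \<le> f a" using RH by linarith
    then show ?thesis using isCont_tendsto_compose[OF fC lr] isCont_tendsto_compose[OF fC ll] by blast
  qed
  show ?thesis using part1 part2 by blast
qed

end
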